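(* Assume (A1)–(A4) and let $b$ be consistent. Let $x^*$ be the unique solution of $\min\{f(Wx): x\in\mathscr D(W),\ Ax=b\}$ and let $y^*=Wx^*$. Then the ADMM iterates satisfy, as $k\to\infty$, $$x_k\to x^*,\quad y_k\to y^*,\quad Wx_k\to y^*,\quad f(y_k)\to f(y^* ),\quad D_{\mu_k}f(y^*,y_k)\to0.$$
   Context: $\mathcal X,\mathcal Y,\mathcal H$ are real Hilbert spaces. Standing assumptions: (A1) $A:\mathcal X\to\mathcal H$ is bounded linear. (A2) $f:\mathcal Y\to(-\infty,\infty]$ is proper, lower semicontinuous and strongly convex with constant $c_0>0$: $f(ty_1+(1-t)y_2)+c_0t(1-t)\|y_1-y_2\|^2\le tf(y_1)+(1-t)f(y_2)$ for all $y_1,y_2$, $t\in[0,1]$. (A3) $W:\mathscr D(W)\subset\mathcal X\to\mathcal Y$ is a densely defined closed linear operator. (A4) There is $c_1>0$ with $\|Ax\|^2+\|Wx\|^2\ge c_1\|x\|^2$ for all $x\in\mathscr D(W)$. $\mathscr D(f)=\{y:f(y)<\infty\}$; $b$ is consistent if $b=Ax$ for some $x\in\mathscr D(W)$ with $Wx\in\mathscr D(f)$. ADMM: fix $\rho_1,\rho_2>0$ and initial $y_0\in\mathcal Y$, $\lambda_0\in\mathcal H$, $\mu_0\in\mathcal Y$. For $k=0,1,\dots$: $x_{k+1}=\arg\min_{x\in\mathscr D(W)}\{\langle\lambda_k,Ax\rangle+\langle\mu_k,Wx\rangle+\frac{\rho_1}{2}\|Ax-b\|^2+\frac{\rho_2}{2}\|Wx-y_k\|^2\}$,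 $y_{k+1}=\arg\min_{y\in\mathcal Y}\{f(y)-\langle\mu_k,y\rangle+\frac{\rho_2}{2}\|Wx_{k+1}-y\|^2\}$, $\lambda_{k+1}=\lambda_k+\rho_1(Ax_{k+1}-b)$, $\mu_{k+1}=\mu_k+\rho_2(Wx_{k+1}-y_{k+1})$. (These minimizers exist and are unique.) One has $\mu_k\in\partial f(y_k)$ for $k\ge1$. Bregman distance: for $y$ with $\mu\in\partial f(y)$, $D_\mu f(\bar y,y)=f(\bar y)-f(y)-\langle\mu,\bar y-y\rangle$. *)

theory Defs
  imports "HOL-Analysis.Analysis"
begin

definition proper_fun :: "('a \<Rightarrow> ereal) \<Rightarrow> bool" where
  "proper_fun f \<longleftrightarrow> (\<forall>y. f y \<noteq> -\<infinity>) \<and> (\<exists>y. f y \<noteq> \<infinity>)"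

definition lsc_fun :: "('a::topological_space \<Rightarrow> ereal) \<Rightarrow> bool" where
  "lsc_fun f \<longleftrightarrow> (\<forall>c::real. closed {y. f y \<le> ereal c})"

definition strongly_convex :: "real \<Rightarrow> ('a::real_normed_vector \<Rightarrow> ereal) \<Rightarrow> bool" where
  "strongly_convex c0 f \<longleftrightarrow>
     (\<forall>y1 y2 t. 0 \<le> t \<and> t \<le> 1 \<longrightarrow>
        f (t *\<^sub>R y1 + (1 - t) *\<^sub>R y2) + ereal (c0 * t * (1 - t) * (norm (y1 - y2))\<^sup>2)
          \<le> ereal t * f y1 + ereal (1 - t) * f y2)"

definition dd_closed_linear_op :: "'a::real_normed_vector set \<Rightarrow> ('a \<Rightarrow> 'b::real_normed_vector) \<Rightarrow> bool" where
  "dd_closed_linear_op D W \<longleftrightarrow>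
     subspace D \<and>
     (\<forall>x\<in>D. \<forall>z\<in>D. W (x + z) = W x + W z) \<and>
     (\<forall>x\<in>D. \<forall>c. W (c *\<^sub>R x) = c *\<^sub>R W x) \<and>
     closure D = UNIV \<and>
     closed {(x, W x) | x. x \<in> D}"

definition bregman :: "('a::real_inner \<Rightarrow> ereal) \<Rightarrow> 'a \<Rightarrow> 'a \<Rightarrow> 'a \<Rightarrow> ereal" where
  "bregman f mu ybar y = f ybar - f y - ereal (inner mu (ybar - y))"

end

theory Submission
  imports Defs "HOL-Analysis.Analysis"
begin


lemma norm_add_scale_sq:
  fixes u v :: "'a::real_inner"
  shows "(norm (u + t *\<^sub>R v))\<^sup>2 = (norm u)\<^sup>2 + 2*t*inner u v + t\<^sup>2 * (norm v)\<^sup>2"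
  unfolding power2_norm_eq_inner
  by (simp add: inner_add_left inner_add_right inner_commute power2_eq_square algebra_simps)

lemma quad_zero:
  fixes L Q :: real
  assumes "Q \<ge> 0" "\<And>t. t*L + t\<^sup>2*Q \<ge> 0"
  shows "L = 0"
proof (rule ccontr)
  assume "L \<noteq> 0"
  define t where "t = - L / (Q+1)"
  have q: "Q + 1 > 0" using assms(1) by simp
  have tq: "t*Q = -L - t" using q unfolding t_def by (simp add: field_simps)
  have "t*L + t\<^sup>2*Q = t*L + t*(t*Q)" by (simp add: power2_eq_square)
  also have "\<dots> = - t\<^sup>2"
  proof -
    have eL: "L = -t - t*Q" using tq by simp
    show ?thesis unfolding eL by (simp add: algebra_simps power2_eq_square)
  qed
  finally have e: "t*L + t\<^sup>2*Q = - t\<^sup>2" .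
  have "t \<noteq> 0" using \<open>L\<noteq>0\<close> q by (simp add: t_def)
  hence "t\<^sup>2 > 0" by simp
  thus False using assms(2)[of t] e by linarith
qed

lemma small_t_limit:
  fixes a b c :: real
  assumes "c \<ge> 0" "\<And>t. 0 < t \<Longrightarrow> t \<le> 1 \<Longrightarrow> a \<ge> b - t*c"
  shows "a \<ge> b"
proof (rule ccontr)
  assume "\<not> a \<ge> b"
  hence ab: "b - a > 0" by simp
  show False
  proof (cases "c = 0")
    case True thus False using assms(2)[of 1] ab by simp
  next
    case False
    hence cp: "c > 0" using assms(1) by simp
    define t where "t = min 1 ((b-a)/(2*c))"
    have t0: "t > 0" using ab cp by (simp add: t_def)
    have t1: "t \<le> 1" by (simp add: t_def)
    have "t \<le> (b-a)/(2*c)" by (simp add: t_def)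
    hence "t*c \<le> (b-a)/(2*c) * c" using cp by (intro mult_right_mono) auto
    also have "\<dots> = (b-a)/2" using cp by simp
    finally have tc: "t*c \<le> (b-a)/2" .
    have "b - t*c \<le> a" using assms(2)[OF t0 t1] .
    with tc ab show False by argo
  qed
qed

lemma S_identity:
  fixes a a' :: "'h::real_inner" and r r' d d' :: "'y::real_inner"
  shows "rho1/2*(norm a)\<^sup>2 + rho2/2*(norm r)\<^sup>2 + rho2/2*(norm d)\<^sup>2
     - (rho1/2*(norm a')\<^sup>2 + rho2/2*(norm r')\<^sup>2 + rho2/2*(norm d')\<^sup>2) - rho2 * inner r' d'
     + (rho1 * inner a' (a' - a) + rho2 * inner r' (r' - r + d') + rho2 * inner (d' - d) (r' - r + d'))
   = rho1/2*(norm (a' - a))\<^sup>2 + rho2/2*(norm (r' - r + (d' - d)))\<^sup>2"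
  unfolding power2_norm_eq_inner
  by (simp add: inner_diff_left inner_diff_right inner_add_left inner_add_right inner_commute field_simps)

lemma young_inner:
  fixes u v :: "'a::real_inner"
  assumes e: "e > 0"
  shows "inner u v \<le> e * (norm u)\<^sup>2 + (norm v)\<^sup>2 / (4*e)"
proof -
  have "0 \<le> (norm ((2*e) *\<^sub>R u - v))\<^sup>2" by simp
  also have "\<dots> = 4*e\<^sup>2*(norm u)\<^sup>2 - 4*e*inner u v + (norm v)\<^sup>2"
    unfolding power2_norm_eq_inner
    by (simp add: inner_diff_left inner_diff_right inner_commute power2_eq_square algebra_simps)
  finally have "4*e*inner u v \<le> 4*e\<^sup>2*(norm u)\<^sup>2 + (norm v)\<^sup>2" by simp
  moreover have "4*e*(e * (norm u)\<^sup>2 + (norm v)\<^sup>2 / (4*e)) = 4*e\<^sup>2*(norm u)\<^sup>2 + (norm v)\<^sup>2"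
    using e by (simp add: field_simps power2_eq_square)
  ultimately have "4*e*inner u v \<le> 4*e*(e * (norm u)\<^sup>2 + (norm v)\<^sup>2 / (4*e))" by simp
  thus ?thesis using e by simp
qed

lemma young_half:
  fixes u v :: "'a::real_inner"
  shows "inner u v \<le> (norm u)\<^sup>2/2 + (norm v)\<^sup>2 / 2"
  using young_inner[of "1/2" u v] by simp




locale admm =
  fixes A :: "'x::{real_inner,complete_space} \<Rightarrow> 'h::{real_inner,complete_space}"
    and W :: "'x \<Rightarrow> 'y::{real_inner,complete_space}"
    and D :: "'x set"
    and f :: "'y \<Rightarrow> ereal"
    and c0 c1 rho1 rho2 :: real
    and b :: 'h
    and xs :: 'x
    and x :: "nat \<Rightarrow> 'x" and y :: "nat \<Rightarrow> 'y"
    and lam :: "nat \<Rightarrow> 'h" and mu :: "nat \<Rightarrow> 'y"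
  assumes A1: "bounded_linear A"
    and A2: "proper_fun f" "lsc_fun f" "c0 > 0" "strongly_convex c0 f"
    and A3: "dd_closed_linear_op D W"
    and A4: "c1 > 0" "\<forall>z\<in>D. (norm (A z))\<^sup>2 + (norm (W z))\<^sup>2 \<ge> c1 * (norm z)\<^sup>2"
    and consistent: "\<exists>z\<in>D. A z = b \<and> f (W z) < \<infinity>"
    and xs_sol: "xs \<in> D" "A xs = b"
      "\<forall>z\<in>D. A z = b \<longrightarrow> f (W xs) \<le> f (W z)"
    and rho: "rho1 > 0" "rho2 > 0"
    and x_step: "\<forall>k. x (Suc k) \<in> D \<and>
       (\<forall>z\<in>D. inner (lam k) (A (x (Suc k))) + inner (mu k) (W (x (Suc k)))
                 + rho1 / 2 * (norm (A (x (Suc k)) - b))\<^sup>2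
                 + rho2 / 2 * (norm (W (x (Suc k)) - y k))\<^sup>2
               \<le> inner (lam k) (A z) + inner (mu k) (W z)
                 + rho1 / 2 * (norm (A z - b))\<^sup>2
                 + rho2 / 2 * (norm (W z - y k))\<^sup>2)"
    and y_step: "\<forall>k. \<forall>v.
       f (y (Suc k)) - ereal (inner (mu k) (y (Suc k)))
         + ereal (rho2 / 2 * (norm (W (x (Suc k)) - y (Suc k)))\<^sup>2)
       \<le> f v - ereal (inner (mu k) v) + ereal (rho2 / 2 * (norm (W (x (Suc k)) - v))\<^sup>2)"
    and lam_step: "\<forall>k. lam (Suc k) = lam k + rho1 *\<^sub>R (A (x (Suc k)) - b)"
    and mu_step: "\<forall>k. mu (Suc k) = mu k + rho2 *\<^sub>R (W (x (Suc k)) - y (Suc k))"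
begin

definition "ys = W xs"
definition "fr v = real_of_ereal (f v)"

lemma D_sub: "subspace D" using A3 by (simp add: dd_closed_linear_op_def)

lemma W_add: "u \<in> D \<Longrightarrow> v \<in> D \<Longrightarrow> W (u + v) = W u + W v"
  using A3 by (simp add: dd_closed_linear_op_def)
lemma W_scale: "u \<in> D \<Longrightarrow> W (c *\<^sub>R u) = c *\<^sub>R W u"
  using A3 by (simp add: dd_closed_linear_op_def)
lemma W_diff: "u \<in> D \<Longrightarrow> v \<in> D \<Longrightarrow> W (u - v) = W u - W v"
proof -
  assume u: "u \<in> D" and v: "v \<in> D"
  have m: "(-1) *\<^sub>R v \<in> D" using v D_sub by (simp add: subspace_neg)
  have "W (u - v) = W (u + (-1) *\<^sub>R v)" by simp
  also have "\<dots> = W u + W ((-1) *\<^sub>R v)" using W_add[OF u m] .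
  also have "\<dots> = W u - W v" using W_scale[OF v, of "-1"] by simp
  finally show ?thesis .
qed
lemma W_lin: "u \<in> D \<Longrightarrow> v \<in> D \<Longrightarrow> W (u + t *\<^sub>R v) = W u + t *\<^sub>R W v"
  using W_add W_scale D_sub subspace_scale by metis

interpretation Alin: bounded_linear A by (rule A1)
lemma A_diff: "A (u - v) = A u - A v" by (rule Alin.diff)
lemma A_lin: "A (u + t *\<^sub>R v) = A u + t *\<^sub>R A v"
  by (simp add: Alin.add Alin.scaleR)

lemma xD: "x (Suc k) \<in> D" using x_step by blast

lemma f_not_minf: "f v \<noteq> -\<infinity>" using A2(1) by (simp add: proper_fun_def)

lemma fin_eq: "f v \<noteq> \<infinity> \<Longrightarrow> f v = ereal (fr v)"
  using f_not_minf[of v] unfolding fr_def by (cases "f v") auto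

lemma f_ys: "f ys = ereal (fr ys)"
proof -
  obtain z where z: "z \<in> D" "A z = b" "f (W z) < \<infinity>" using consistent by blast
  have "f ys \<le> f (W z)" using xs_sol z by (simp add: ys_def)
  hence "f ys \<noteq> \<infinity>" using z(3) by auto
  thus ?thesis by (rule fin_eq)
qed

lemma f_y: "f (y (Suc k)) = ereal (fr (y (Suc k)))"
proof (rule fin_eq, rule notI)
  assume inf: "f (y (Suc k)) = \<infinity>"
  have "f (y (Suc k)) - ereal (inner (mu k) (y (Suc k)))
         + ereal (rho2 / 2 * (norm (W (x (Suc k)) - y (Suc k)))\<^sup>2)
       \<le> f ys - ereal (inner (mu k) ys) + ereal (rho2 / 2 * (norm (W (x (Suc k)) - ys))\<^sup>2)"
    using y_step by blast
  thus False using inf f_ys by simp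
qed

end


context admm begin

lemma sub_real:
  assumes fv: "f v = ereal (fr v)"
  shows "fr v \<ge> fr (y (Suc k)) + inner (mu (Suc k)) (v - y (Suc k)) + c0 * (norm (v - y (Suc k)))\<^sup>2"
proof -
  define y' where "y' = y (Suc k)"
  define w where "w = W (x (Suc k))"
  define m where "m = mu k"
  define N where "N = (norm (v - y'))\<^sup>2"
  define P where "P = inner m (v - y')"
  define Q where "Q = inner (w - y') (v - y')"
  define NW where "NW = (norm (w - y'))\<^sup>2"
  have fy': "f y' = ereal (fr y')" unfolding y'_def by (rule f_y)
  have mS: "mu (Suc k) = m + rho2 *\<^sub>R (w - y')"
    using mu_step by (simp add: m_def w_def y'_def)
  have key: "fr v - fr y' \<ge> P + rho2 * Q + c0 * N - t * ((c0 + rho2/2) * N)"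
    if t0: "0 < t" and t1: "t \<le> 1" for t
  proof -
    define yt where "yt = y' + t *\<^sub>R (v - y')"
    have yt_eq: "t *\<^sub>R v + (1 - t) *\<^sub>R y' = yt"
      by (simp add: yt_def scaleR_diff_left scaleR_diff_right)
    have sc0: "f (t *\<^sub>R v + (1 - t) *\<^sub>R y') + ereal (c0 * t * (1 - t) * (norm (v - y'))\<^sup>2)
          \<le> ereal t * f v + ereal (1 - t) * f y'"
      using A2(4) t0 t1 unfolding strongly_convex_def by simp
    have sc: "f yt + ereal (c0 * t * (1 - t) * N) \<le> ereal t * f v + ereal (1 - t) * f y'"
      using sc0 unfolding yt_eq N_def .
    hence "f yt \<noteq> \<infinity>" using fv fy' by auto
    hence fyt: "f yt = ereal (fr yt)" by (rule fin_eq)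
    have sc': "fr yt + c0 * t * (1 - t) * N \<le> t * fr v + (1 - t) * fr y'"
      using sc unfolding fyt fv fy' by simp
    have ys: "f y' - ereal (inner m y') + ereal (rho2 / 2 * (norm (w - y'))\<^sup>2)
       \<le> f yt - ereal (inner m yt) + ereal (rho2 / 2 * (norm (w - yt))\<^sup>2)"
      using y_step unfolding m_def w_def y'_def by blast
    have ys': "fr y' - inner m y' + rho2 / 2 * (norm (w - y'))\<^sup>2
       \<le> fr yt - inner m yt + rho2 / 2 * (norm (w - yt))\<^sup>2"
      using ys unfolding fyt fy' by simp
    have i1: "inner m yt = inner m y' + t * P"
      unfolding yt_def P_def by (simp only: inner_add_right inner_scaleR_right)
    have "w - yt = (w - y') + (-t) *\<^sub>R (v - y')" unfolding yt_def by simp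
    hence i2: "(norm (w - yt))\<^sup>2 = NW - 2 * t * Q + t\<^sup>2 * N"
      unfolding Q_def N_def NW_def by (simp only: norm_add_scale_sq) simp
    have ys'': "fr y' - inner m y' + rho2 / 2 * NW
       \<le> fr yt - (inner m y' + t * P) + rho2 / 2 * (NW - 2 * t * Q + t\<^sup>2 * N)"
      using ys' unfolding i1 i2 NW_def .
    have id: "t * (fr v - fr y') - t * (P + rho2 * Q + c0 * N - t * ((c0 + rho2/2) * N))
       = (t * fr v + (1 - t) * fr y' - (fr yt + c0 * t * (1 - t) * N))
       + ((fr yt - (inner m y' + t * P) + rho2 / 2 * (NW - 2 * t * Q + t\<^sup>2 * N))
          - (fr y' - inner m y' + rho2 / 2 * NW))"
      by (simp add: field_simps power2_eq_square)
    have "t * (fr v - fr y') - t * (P + rho2 * Q + c0 * N - t * ((c0 + rho2/2) * N)) \<ge> 0"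
      unfolding id using sc' ys'' by linarith
    hence "t * (P + rho2 * Q + c0 * N - t * ((c0 + rho2/2) * N)) \<le> t * (fr v - fr y')" by simp
    thus ?thesis using t0 by simp
  qed
  have "fr v - fr y' \<ge> P + rho2 * Q + c0 * N"
    by (rule small_t_limit[of "(c0 + rho2/2) * N"])
       (use key A2(3) rho(2) in \<open>auto simp: N_def\<close>)
  moreover have "inner (mu (Suc k)) (v - y') = P + rho2 * Q"
    unfolding mS P_def Q_def by (simp only: inner_add_left inner_scaleR_left)
  ultimately show ?thesis by (simp add: y'_def N_def)
qed

end


context admm begin

lemma X_opt:
  assumes z: "z \<in> D"
  shows "inner (lam (Suc k)) (A z) + inner (mu (Suc k) + rho2 *\<^sub>R (y (Suc k) - y k)) (W z) = 0"
proof -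
  define x' where "x' = x (Suc k)"
  have x'D: "x' \<in> D" by (simp add: x'_def xD)
  define a1 where "a1 = A x' - b"
  define r1 where "r1 = W x' - y k"
  define L where "L = inner (lam k) (A z) + inner (mu k) (W z) + rho1 * inner a1 (A z)
     + rho2 * inner r1 (W z)"
  define Q where "Q = rho1/2 * (norm (A z))\<^sup>2 + rho2/2 * (norm (W z))\<^sup>2"
  have "t * L + t\<^sup>2 * Q \<ge> 0" for t
  proof -
    have xtD: "x' + t *\<^sub>R z \<in> D" using x'D z D_sub by (simp add: subspace_add subspace_scale)
    have le: "inner (lam k) (A x') + inner (mu k) (W x')
                 + rho1 / 2 * (norm (A x' - b))\<^sup>2
                 + rho2 / 2 * (norm (W x' - y k))\<^sup>2
               \<le> inner (lam k) (A (x' + t *\<^sub>R z)) + inner (mu k) (W (x' + t *\<^sub>R z))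
                 + rho1 / 2 * (norm (A (x' + t *\<^sub>R z) - b))\<^sup>2
                 + rho2 / 2 * (norm (W (x' + t *\<^sub>R z) - y k))\<^sup>2"
      using x_step xtD unfolding x'_def by blast
    have e1: "A (x' + t *\<^sub>R z) - b = a1 + t *\<^sub>R A z" unfolding a1_def A_lin by simp
    have e2: "W (x' + t *\<^sub>R z) - y k = r1 + t *\<^sub>R W z" unfolding r1_def W_lin[OF x'D z] by simp
    have e3: "inner (lam k) (A (x' + t *\<^sub>R z)) = inner (lam k) (A x') + t * inner (lam k) (A z)"
      unfolding A_lin by (simp only: inner_add_right inner_scaleR_right)
    have e4: "inner (mu k) (W (x' + t *\<^sub>R z)) = inner (mu k) (W x') + t * inner (mu k) (W z)"
      unfolding W_lin[OF x'D z] by (simp only: inner_add_right inner_scaleR_right)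
    have le2: "inner (lam k) (A x') + inner (mu k) (W x')
                 + rho1 / 2 * (norm a1)\<^sup>2 + rho2 / 2 * (norm r1)\<^sup>2
               \<le> inner (lam k) (A x') + t * inner (lam k) (A z) + (inner (mu k) (W x') + t * inner (mu k) (W z))
                 + rho1 / 2 * ((norm a1)\<^sup>2 + 2*t*inner a1 (A z) + t\<^sup>2 * (norm (A z))\<^sup>2)
                 + rho2 / 2 * ((norm r1)\<^sup>2 + 2*t*inner r1 (W z) + t\<^sup>2 * (norm (W z))\<^sup>2)"
      using le unfolding e1 e2 e3 e4 norm_add_scale_sq a1_def r1_def .
    have id: "(inner (lam k) (A x') + t * inner (lam k) (A z) + (inner (mu k) (W x') + t * inner (mu k) (W z))
                 + rho1 / 2 * ((norm a1)\<^sup>2 + 2*t*inner a1 (A z) + t\<^sup>2 * (norm (A z))\<^sup>2)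
                 + rho2 / 2 * ((norm r1)\<^sup>2 + 2*t*inner r1 (W z) + t\<^sup>2 * (norm (W z))\<^sup>2))
              - (inner (lam k) (A x') + inner (mu k) (W x')
                 + rho1 / 2 * (norm a1)\<^sup>2 + rho2 / 2 * (norm r1)\<^sup>2) = t * L + t\<^sup>2 * Q"
      unfolding L_def Q_def by (simp add: field_simps power2_eq_square)
    show ?thesis using le2 id by linarith
  qed
  hence L0: "L = 0" by (intro quad_zero[of Q]) (use rho in \<open>auto simp: Q_def\<close>)
  have m: "mu k + rho2 *\<^sub>R r1 = mu (Suc k) + rho2 *\<^sub>R (y (Suc k) - y k)"
    using mu_step by (simp add: x'_def r1_def algebra_simps)
  have l: "lam (Suc k) = lam k + rho1 *\<^sub>R a1" using lam_step by (simp add: x'_def a1_def)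
  have "inner (lam (Suc k)) (A z) + inner (mu (Suc k) + rho2 *\<^sub>R (y (Suc k) - y k)) (W z) = L"
    unfolding l m[symmetric] L_def by (simp only: inner_add_left inner_scaleR_left)
  thus ?thesis using L0 by simp
qed

end


context admm begin

definition "a k = A (x k) - b"
definition "r k = W (x k) - y k"
definition "d k = y k - y (k - 1)"
definition "w k = ys - W (x k)"
definition "Dk k = fr ys - fr (y k) - inner (mu k) (ys - y k)"
definition "S k = rho1/2*(norm (a k))\<^sup>2 + rho2/2*(norm (r k))\<^sup>2 + rho2/2*(norm (d k))\<^sup>2"

lemma xD1: "n \<ge> 1 \<Longrightarrow> x n \<in> D"
  using xD by (cases n) auto

lemma fy1: "n \<ge> 1 \<Longrightarrow> f (y n) = ereal (fr (y n))"
  using f_y by (cases n) auto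

lemma sub1: "n \<ge> 1 \<Longrightarrow> f v = ereal (fr v) \<Longrightarrow>
   fr v \<ge> fr (y n) + inner (mu n) (v - y n) + c0 * (norm (v - y n))\<^sup>2"
  using sub_real by (cases n) auto

lemma X1: "n \<ge> 1 \<Longrightarrow> z \<in> D \<Longrightarrow> inner (lam n) (A z) + inner (mu n + rho2 *\<^sub>R d n) (W z) = 0"
  using X_opt[of z "n - 1"] by (cases n) (auto simp: d_def)

lemma Xdiff: "p \<ge> 1 \<Longrightarrow> q \<ge> 1 \<Longrightarrow> z \<in> D \<Longrightarrow>
  inner (lam q - lam p) (A z) + inner (mu q - mu p) (W z) + rho2 * inner (d q - d p) (W z) = 0"
proof -
  assume p: "p \<ge> 1" and q: "q \<ge> 1" and z: "z \<in> D"
  have 1: "inner (lam p) (A z) + inner (mu p) (W z) + rho2 * inner (d p) (W z) = 0"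
    using X1[OF p z] by (simp only: inner_add_left inner_scaleR_left)
  have 2: "inner (lam q) (A z) + inner (mu q) (W z) + rho2 * inner (d q) (W z) = 0"
    using X1[OF q z] by (simp only: inner_add_left inner_scaleR_left)
  show ?thesis using 1 2 by (simp only: inner_diff_left right_diff_distrib)
qed

lemma mono1: "n \<ge> 1 \<Longrightarrow> m \<ge> 1 \<Longrightarrow> inner (mu m - mu n) (y m - y n) \<ge> 2*c0*(norm (y m - y n))\<^sup>2"
proof -
  assume n: "n \<ge> 1" and m: "m \<ge> 1"
  have 1: "fr (y m) \<ge> fr (y n) + inner (mu n) (y m - y n) + c0 * (norm (y m - y n))\<^sup>2"
    using sub1[OF n fy1[OF m]] .
  have 2: "fr (y n) \<ge> fr (y m) + inner (mu m) (y n - y m) + c0 * (norm (y n - y m))\<^sup>2"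
    using sub1[OF m fy1[OF n]] .
  have "inner (mu m) (y n - y m) = - inner (mu m) (y m - y n)"
    by (simp add: inner_diff_right)
  moreover have "norm (y n - y m) = norm (y m - y n)" by (rule norm_minus_commute)
  ultimately show ?thesis using 1 2 by (simp add: inner_diff_left)
qed

lemma mu_diff: "mu (Suc k) - mu k = rho2 *\<^sub>R r (Suc k)"
  using mu_step by (simp add: r_def)
lemma lam_diff: "lam (Suc k) - lam k = rho1 *\<^sub>R a (Suc k)"
  using lam_step by (simp add: a_def)
lemma d_Suc: "d (Suc k) = y (Suc k) - y k" by (simp add: d_def)

lemma S_step:
  assumes k: "k \<ge> 1"
  shows "S (Suc k) + 2*c0*(norm (d (Suc k)))\<^sup>2 \<le> S k"
proof -
  have k1: "Suc k \<ge> 1" by simp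
  have zD: "x (Suc k) - x k \<in> D" using xD1[OF k1] xD1[OF k] D_sub by (simp add: subspace_diff)
  have Az: "A (x (Suc k) - x k) = a (Suc k) - a k" by (simp add: A_diff a_def)
  have Wz: "W (x (Suc k) - x k) = r (Suc k) - r k + d (Suc k)"
    by (simp add: W_diff[OF xD1[OF k1] xD1[OF k]] r_def d_def)
  have E: "rho1 * inner (a (Suc k)) (a (Suc k) - a k) + rho2 * inner (r (Suc k)) (r (Suc k) - r k + d (Suc k))
     + rho2 * inner (d (Suc k) - d k) (r (Suc k) - r k + d (Suc k)) = 0"
    using Xdiff[OF k k1 zD] unfolding Az Wz lam_diff mu_diff by simp
  have M: "rho2 * inner (r (Suc k)) (d (Suc k)) \<ge> 2*c0*(norm (d (Suc k)))\<^sup>2"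
    using mono1[OF k k1] unfolding mu_diff d_Suc[symmetric] by simp
  have I: "S k - S (Suc k) - rho2 * inner (r (Suc k)) (d (Suc k)) + 0
     = rho1/2*(norm (a (Suc k) - a k))\<^sup>2 + rho2/2*(norm (r (Suc k) - r k + (d (Suc k) - d k)))\<^sup>2"
    unfolding S_def E[symmetric] by (rule S_identity)
  have "rho1/2*(norm (a (Suc k) - a k))\<^sup>2 + rho2/2*(norm (r (Suc k) - r k + (d (Suc k) - d k)))\<^sup>2 \<ge> 0"
    using rho by simp
  thus ?thesis using I M by linarith
qed

end


lemma tele_summable:
  fixes s c :: "nat \<Rightarrow> real"
  assumes st: "\<And>k. s (Suc k) + c k \<le> s k" and s0: "\<And>k. 0 \<le> s k" and c0: "\<And>k. 0 \<le> c k"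
  shows "summable c" "\<And>k. s k \<le> s 0"
proof -
  have part: "(\<Sum>j<n. c j) \<le> s 0 - s n" for n
  proof (induction n)
    case 0 then show ?case by simp
  next
    case (Suc n) then show ?case using st[of n] by simp
  qed
  have pb: "(\<Sum>j<n. c j) \<le> s 0" for n using part[of n] s0[of n] by linarith
  show "summable c"
    by (rule summableI_nonneg_bounded[where x="s 0"]) (use c0 pb in auto)
  show "s k \<le> s 0" for k using part[of k] sum_nonneg[of "{..<k}" c] c0 by (smt (verit))
qed

lemma fejer:
  fixes u p e :: "nat \<Rightarrow> real"
  assumes st: "\<And>k. u (Suc k) + p (Suc k) \<le> u k + e k"
    and lb: "\<And>k. B \<le> u k" and p0: "\<And>k. 0 \<le> p k" and e0: "\<And>k. 0 \<le> e k"
    and se: "summable e"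
  shows "summable p" "convergent u"
proof -
  define V where "V k = u k + (\<Sum>j<k. p (Suc j)) - (\<Sum>j<k. e j)" for k
  have dec: "decseq V"
    unfolding decseq_Suc_iff V_def using st by (simp add: algebra_simps)
  have se_le: "(\<Sum>j<k. e j) \<le> suminf e" for k
    using se e0 by (intro sum_le_suminf) auto
  have Vlb: "B - suminf e \<le> V k" for k
  proof -
    have "0 \<le> (\<Sum>j<k. p (Suc j))" by (rule sum_nonneg) (use p0 in auto)
    thus ?thesis using lb[of k] se_le[of k] unfolding V_def by linarith
  qed
  obtain L where VL: "V \<longlonglongrightarrow> L" "\<forall>i. L \<le> V i"
    using decseq_convergent[of V "B - suminf e"] dec Vlb by blast
  have ps: "(\<Sum>j<k. p (Suc j)) \<le> V 0 - B + suminf e" for k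
  proof -
    have "V k \<le> V 0" using dec by (simp add: decseq_def)
    thus ?thesis using lb[of k] se_le[of k] unfolding V_def by simp
  qed
  have sps: "summable (\<lambda>j. p (Suc j))"
    by (rule summableI_nonneg_bounded[where x="V 0 - B + suminf e"]) (use p0 ps in auto)
  thus "summable p" by (simp add: summable_Suc_iff)
  have "(\<lambda>k. V k - (\<Sum>j<k. p (Suc j)) + (\<Sum>j<k. e j)) \<longlonglongrightarrow> L - suminf (\<lambda>j. p (Suc j)) + suminf e"
    by (intro tendsto_intros VL(1) summable_LIMSEQ sps se)
  moreover have "(\<lambda>k. V k - (\<Sum>j<k. p (Suc j)) + (\<Sum>j<k. e j)) = u"
    unfolding V_def by auto
  ultimately show "convergent u" unfolding convergent_def by auto
qed

lemma kmono:
  fixes s :: "nat \<Rightarrow> real"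
  assumes s0: "\<And>k. 0 \<le> s k" and dec: "\<And>k. s (Suc k) \<le> s k" and ss: "summable s"
  shows "(\<lambda>k. real k * s k) \<longlonglongrightarrow> 0"
proof (rule LIMSEQ_I)
  fix eps :: real assume eps: "eps > 0"
  obtain N where N: "\<And>m n. m \<ge> N \<Longrightarrow> norm (sum s {m..<n}) < eps/2"
    using ss unfolding summable_Cauchy by (meson eps half_gt_zero)
  have decs: "decseq s" using dec by (simp add: decseq_Suc_iff)
  show "\<exists>no. \<forall>k\<ge>no. norm (real k * s k - 0) < eps"
  proof (intro exI allI impI)
    fix k assume k: "k \<ge> 2*N"
    define h where "h = k div 2"
    have hN: "h \<ge> N" using k by (simp add: h_def)
    have "(\<Sum>j\<in>{h..<k}. s k) \<le> (\<Sum>j\<in>{h..<k}. s j)"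
      using decs by (intro sum_mono) (auto simp: decseq_def)
    moreover have "(\<Sum>j\<in>{h..<k}. s j) < eps/2"
      using N[OF hN, of k] sum_nonneg[of "{h..<k}" s] s0 by simp
    ultimately have 1: "real (k - h) * s k < eps/2" by simp
    have 2: "real k \<le> 2 * real (k - h)" unfolding h_def by linarith
    have "real k * s k \<le> 2 * real (k - h) * s k" using 2 s0[of k] by (intro mult_right_mono) auto
    also have "\<dots> < eps" using 1 by simp
    finally show "norm (real k * s k - 0) < eps" using s0[of k] by simp
  qed
qed


context admm begin

lemma fys1: "f ys = ereal (fr ys)" by (rule f_ys)

lemma D_step:
  assumes k: "k \<ge> 1"
  shows "Dk (Suc k) + c0*(norm (d (Suc k)))\<^sup>2 + rho1*(norm (a (Suc k)))\<^sup>2 + rho2*(norm (r (Suc k)))\<^sup>2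
     \<le> Dk k + rho2 * inner (d (Suc k) - d k) (w (Suc k))"
proof -
  have k1: "Suc k \<ge> 1" by simp
  have zD: "xs - x (Suc k) \<in> D" using xs_sol(1) xD1[OF k1] D_sub by (simp add: subspace_diff)
  have Az: "A (xs - x (Suc k)) = - a (Suc k)" by (simp add: A_diff a_def xs_sol(2))
  have Wz: "W (xs - x (Suc k)) = w (Suc k)"
    by (simp add: W_diff[OF xs_sol(1) xD1[OF k1]] w_def ys_def)
  have E: "- rho1 * (norm (a (Suc k)))\<^sup>2 + rho2 * inner (r (Suc k)) (w (Suc k))
     + rho2 * inner (d (Suc k) - d k) (w (Suc k)) = 0"
    using Xdiff[OF k k1 zD] unfolding Az Wz lam_diff mu_diff
    by (simp add: power2_norm_eq_inner)
  have B: "fr (y (Suc k)) \<ge> fr (y k) + inner (mu k) (y (Suc k) - y k) + c0*(norm (d (Suc k)))\<^sup>2"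
    using sub1[OF k fy1[OF k1]] by (simp add: d_Suc)
  have yy: "ys - y (Suc k) = w (Suc k) + r (Suc k)" by (simp add: w_def r_def)
  have e1: "Dk (Suc k) = fr ys - fr (y (Suc k)) - (inner (mu k) ys - inner (mu k) (y (Suc k)))
      - rho2 * inner (r (Suc k)) (w (Suc k)) - rho2 * (norm (r (Suc k)))\<^sup>2"
  proof -
    have "Dk (Suc k) = fr ys - fr (y (Suc k)) - inner (mu k + rho2 *\<^sub>R r (Suc k)) (ys - y (Suc k))"
      unfolding Dk_def using mu_diff[of k] by (simp add: algebra_simps)
    also have "inner (mu k + rho2 *\<^sub>R r (Suc k)) (ys - y (Suc k))
        = (inner (mu k) ys - inner (mu k) (y (Suc k))) + rho2 * (inner (r (Suc k)) (w (Suc k)) + (norm (r (Suc k)))\<^sup>2)"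
    proof -
      have h: "inner (r (Suc k)) (ys - y (Suc k)) = inner (r (Suc k)) (w (Suc k)) + (norm (r (Suc k)))\<^sup>2"
        unfolding yy by (simp add: inner_add_right power2_norm_eq_inner)
      show ?thesis unfolding inner_add_left inner_scaleR_left h by (simp add: inner_diff_right)
    qed
    finally show ?thesis by (simp add: algebra_simps)
  qed
  have e2: "Dk k = fr ys - fr (y k) - (inner (mu k) ys - inner (mu k) (y k))"
    unfolding Dk_def by (simp add: inner_diff_right)
  have e3: "inner (mu k) (y (Suc k) - y k) = inner (mu k) (y (Suc k)) - inner (mu k) (y k)"
    by (simp add: inner_diff_right)
  show ?thesis using E B e1 e2 e3 by linarith
qed

definition "H k = Dk k - rho2 * inner (d k) (w k) + rho2/4 * (norm (r k))\<^sup>2"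
definition "P k = rho1*(norm (a k))\<^sup>2 + rho2/2*(norm (r k))\<^sup>2"
definition "e k = rho2 * (5/2*(norm (d k))\<^sup>2 + 1/2*(norm (d (Suc k)))\<^sup>2)"

lemma H_step:
  assumes k: "k \<ge> 1"
  shows "H (Suc k) + P (Suc k) \<le> H k + e k"
proof -
  have k1: "Suc k \<ge> 1" by simp
  have ww: "w k - w (Suc k) = r (Suc k) - r k + d (Suc k)"
    by (simp add: W_diff[OF xD1[OF k1] xD1[OF k]] w_def r_def d_def algebra_simps)
  have i: "inner (d (Suc k) - d k) (w (Suc k)) - inner (d (Suc k)) (w (Suc k)) + inner (d k) (w k)
      = inner (d k) (r (Suc k)) + inner (d k) (- r k) + inner (d k) (d (Suc k))"
  proof -
    have "inner (d (Suc k) - d k) (w (Suc k)) - inner (d (Suc k)) (w (Suc k)) + inner (d k) (w k)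
        = inner (d k) (w k - w (Suc k))" by (simp add: inner_diff_left inner_diff_right)
    also have "\<dots> = inner (d k) (r (Suc k)) + inner (d k) (- r k) + inner (d k) (d (Suc k))"
      unfolding ww by (simp add: inner_diff_right inner_add_right)
    finally show ?thesis .
  qed
  have y1: "inner (d k) (r (Suc k)) \<le> 1 * (norm (d k))\<^sup>2 + (norm (r (Suc k)))\<^sup>2 / (4*1)"
    by (rule young_inner) simp
  have y2: "inner (d k) (- r k) \<le> 1 * (norm (d k))\<^sup>2 + (norm (- r k))\<^sup>2 / (4*1)"
    by (rule young_inner) simp
  have y3: "inner (d k) (d (Suc k)) \<le> (norm (d k))\<^sup>2/2 + (norm (d (Suc k)))\<^sup>2/2"
    by (rule young_half)
  have "inner (d k) (r (Suc k)) + inner (d k) (- r k) + inner (d k) (d (Suc k))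
     \<le> 5/2*(norm (d k))\<^sup>2 + 1/2*(norm (d (Suc k)))\<^sup>2 + (norm (r (Suc k)))\<^sup>2/4 + (norm (r k))\<^sup>2/4"
    using y1 y2 y3 by simp
  hence bnd: "rho2 * (inner (d (Suc k) - d k) (w (Suc k)) - inner (d (Suc k)) (w (Suc k)) + inner (d k) (w k))
     \<le> rho2 * (5/2*(norm (d k))\<^sup>2 + 1/2*(norm (d (Suc k)))\<^sup>2 + (norm (r (Suc k)))\<^sup>2/4 + (norm (r k))\<^sup>2/4)"
    unfolding i using rho(2) by (intro mult_left_mono) auto
  have Ds: "Dk (Suc k) + c0*(norm (d (Suc k)))\<^sup>2 + rho1*(norm (a (Suc k)))\<^sup>2 + rho2*(norm (r (Suc k)))\<^sup>2
     \<le> Dk k + rho2 * inner (d (Suc k) - d k) (w (Suc k))" by (rule D_step[OF k])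
  have c: "c0*(norm (d (Suc k)))\<^sup>2 \<ge> 0" using A2(3) by simp
  show ?thesis using Ds bnd c unfolding H_def P_def e_def by (simp add: algebra_simps)
qed

end


context admm begin

lemma S_nonneg: "S k \<ge> 0" using rho unfolding S_def by simp

lemma S_facts: "summable (\<lambda>k. (norm (d k))\<^sup>2)" "\<And>k. k \<ge> 1 \<Longrightarrow> S k \<le> S 1"
proof -
  define s where "s k = S (Suc k)" for k
  define c where "c k = 2*c0*(norm (d (Suc (Suc k))))\<^sup>2" for k
  have st: "s (Suc k) + c k \<le> s k" for k
    unfolding s_def c_def using S_step[of "Suc k"] by simp
  have c0': "0 \<le> c k" for k using A2(3) by (simp add: c_def)
  have s0: "0 \<le> s k" for k by (simp add: s_def S_nonneg)
  note T = tele_summable[of s c, OF st s0 c0']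
  have "summable (\<lambda>k. (1/(2*c0)) * c k)" using T(1) by (rule summable_mult)
  hence "summable (\<lambda>k. (norm (d (Suc (Suc k))))\<^sup>2)" using A2(3) by (simp add: c_def)
  thus "summable (\<lambda>k. (norm (d k))\<^sup>2)"
    using summable_Suc_iff[of "\<lambda>k. (norm (d (Suc k)))\<^sup>2"] summable_Suc_iff[of "\<lambda>k. (norm (d k))\<^sup>2"]
    by simp
  show "S k \<le> S 1" if "k \<ge> 1" for k
    using T(2)[of "k - 1"] that by (simp add: s_def)
qed

definition "Bd = 2 * S 1 / rho2"

lemma d_bnd: "k \<ge> 1 \<Longrightarrow> (norm (d k))\<^sup>2 \<le> Bd"
proof -
  assume k: "k \<ge> 1"
  have "rho2/2*(norm (d k))\<^sup>2 \<le> S 1"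
    using S_facts(2)[OF k] rho unfolding S_def
    by (smt (verit) mult_pos_pos zero_le_power2 divide_pos_pos zero_less_numeral mult_nonneg_nonneg)
  thus ?thesis using rho unfolding Bd_def by (simp add: field_simps)
qed
lemma r_bnd: "k \<ge> 1 \<Longrightarrow> (norm (r k))\<^sup>2 \<le> Bd"
proof -
  assume k: "k \<ge> 1"
  have "rho2/2*(norm (r k))\<^sup>2 \<le> S 1"
    using S_facts(2)[OF k] rho unfolding S_def
    by (smt (verit) mult_pos_pos zero_le_power2 divide_pos_pos zero_less_numeral mult_nonneg_nonneg)
  thus ?thesis using rho unfolding Bd_def by (simp add: field_simps)
qed
lemma Bd_nonneg: "Bd \<ge> 0"
proof -
  have "0 \<le> (norm (d 1))\<^sup>2" by simp
  thus ?thesis using d_bnd[of 1] by linarith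
qed

lemma D_lower: "k \<ge> 1 \<Longrightarrow> Dk k \<ge> c0 * (norm (ys - y k))\<^sup>2"
  using sub1[of k ys, OF _ f_ys] unfolding Dk_def by simp

lemma w_split: "w k = (ys - y k) - r k" by (simp add: w_def r_def)

lemma dw_bound:
  assumes k: "k \<ge> 1" and ep: "ep > 0"
  shows "rho2 * inner (d k) (w k) \<le> ep * (norm (ys - y k))\<^sup>2 + (rho2\<^sup>2/(4*ep) + rho2) * Bd"
proof -
  have 1: "inner (ys - y k) (d k) \<le> (ep/rho2) * (norm (ys - y k))\<^sup>2 + (norm (d k))\<^sup>2 / (4*(ep/rho2))"
    using rho ep by (intro young_inner) auto
  have 2: "inner (d k) (- r k) \<le> (norm (d k))\<^sup>2/2 + (norm (- r k))\<^sup>2/2" by (rule young_half)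
  have "inner (d k) (w k) = inner (ys - y k) (d k) + inner (d k) (- r k)"
    by (simp add: w_split inner_diff_right inner_commute)
  hence "rho2 * inner (d k) (w k) \<le> rho2 * ((ep/rho2) * (norm (ys - y k))\<^sup>2 + (norm (d k))\<^sup>2 / (4*(ep/rho2))
      + ((norm (d k))\<^sup>2/2 + (norm (r k))\<^sup>2/2))"
    using 1 2 rho by (intro mult_left_mono) auto
  also have "\<dots> = ep * (norm (ys - y k))\<^sup>2 + (rho2\<^sup>2/(4*ep)) * (norm (d k))\<^sup>2 + rho2/2 * (norm (d k))\<^sup>2 + rho2/2 * (norm (r k))\<^sup>2"
    using rho ep by (simp add: field_simps power2_eq_square)
  also have "\<dots> \<le> ep * (norm (ys - y k))\<^sup>2 + (rho2\<^sup>2/(4*ep)) * Bd + rho2/2 * Bd + rho2/2 * Bd"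
    using d_bnd[OF k] r_bnd[OF k] rho ep
    by (intro add_mono mult_left_mono order_refl) auto
  finally show ?thesis by (simp add: algebra_simps)
qed

lemma H_lower: "k \<ge> 1 \<Longrightarrow> H k \<ge> - (rho2\<^sup>2/(4*c0) + rho2) * Bd"
proof -
  assume k: "k \<ge> 1"
  have "rho2 * inner (d k) (w k) \<le> c0 * (norm (ys - y k))\<^sup>2 + (rho2\<^sup>2/(4*c0) + rho2) * Bd"
    using dw_bound[OF k A2(3)] .
  moreover have "rho2/4 * (norm (r k))\<^sup>2 \<ge> 0" using rho by simp
  ultimately show ?thesis using D_lower[OF k] unfolding H_def by linarith
qed

lemma D_upper: "k \<ge> 1 \<Longrightarrow> Dk k \<le> 2 * H k + 2 * (rho2\<^sup>2/(2*c0) + rho2) * Bd"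
proof -
  assume k: "k \<ge> 1"
  have h: "rho2 * inner (d k) (w k) \<le> c0/2 * (norm (ys - y k))\<^sup>2 + (rho2\<^sup>2/(4*(c0/2)) + rho2) * Bd"
    using dw_bound[OF k, of "c0/2"] A2(3) by simp
  have q: "rho2\<^sup>2/(4*(c0/2)) = rho2\<^sup>2/(2*c0)" by simp
  have h2: "2 * (rho2 * inner (d k) (w k)) \<le> c0 * (norm (ys - y k))\<^sup>2 + 2 * ((rho2\<^sup>2/(2*c0) + rho2) * Bd)"
    using h unfolding q by simp
  have r0: "rho2/4 * (norm (r k))\<^sup>2 \<ge> 0" using rho by simp
  have m: "2 * (rho2\<^sup>2/(2*c0) + rho2) * Bd = 2 * ((rho2\<^sup>2/(2*c0) + rho2) * Bd)" by simp
  have lh: "\<And>X C K R D. (2::real)*X \<le> C + 2*K \<Longrightarrow> 0 \<le> R \<Longrightarrow> C \<le> D \<Longrightarrow> D \<le> 2*(D - X + R) + 2*K"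
    by argo
  show ?thesis unfolding m H_def by (rule lh[OF h2 r0 D_lower[OF k]])
qed

lemma H_facts: "summable P" "convergent H"
proof -
  define u where "u k = H (Suc k)" for k
  define p where "p k = P (Suc k)" for k
  define ee where "ee k = e (Suc k)" for k
  have st: "u (Suc k) + p (Suc k) \<le> u k + ee k" for k
    unfolding u_def p_def ee_def using H_step[of "Suc k"] by simp
  have lb: "- (rho2\<^sup>2/(4*c0) + rho2) * Bd \<le> u k" for k unfolding u_def by (rule H_lower) simp
  have p0: "0 \<le> p k" for k using rho by (simp add: p_def P_def)
  have e0: "0 \<le> ee k" for k using rho by (simp add: ee_def e_def)
  have sd: "summable (\<lambda>k. (norm (d k))\<^sup>2)" by (rule S_facts(1))
  have sd': "summable (\<lambda>k. (norm (d (Suc k)))\<^sup>2)"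
    using sd summable_Suc_iff[of "\<lambda>k. (norm (d k))\<^sup>2"] by simp
  have "summable (\<lambda>k. rho2 * (5/2*(norm (d k))\<^sup>2 + 1/2*(norm (d (Suc k)))\<^sup>2))"
    using sd sd' by (intro summable_mult summable_add summable_mult)
  hence "summable e" unfolding e_def[abs_def] .
  hence se: "summable ee" unfolding ee_def[abs_def] by (simp add: summable_Suc_iff)
  note F = fejer[of u p ee, OF st lb p0 e0 se]
  show "summable P" using F(1) unfolding p_def[abs_def] by (simp add: summable_Suc_iff)
  show "convergent H" using F(2) unfolding u_def[abs_def] by (simp add: convergent_Suc_iff)
qed

end



lemma sq_tendsto_zero:
  fixes F :: "nat \<Rightarrow> real"
  assumes "\<And>n. F n \<ge> 0" "(\<lambda>n. (F n)\<^sup>2) \<longlonglongrightarrow> 0"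
  shows "F \<longlonglongrightarrow> 0"
proof -
  have "(\<lambda>n. sqrt ((F n)\<^sup>2)) \<longlonglongrightarrow> sqrt 0" by (intro tendsto_intros assms(2))
  thus ?thesis using assms(1) by simp
qed

lemma sum_tail_zero:
  fixes al :: "nat \<Rightarrow> real"
  assumes a0: "\<And>n. al n \<ge> 0" and sa: "summable (\<lambda>n. (al n)\<^sup>2)"
    and na: "(\<lambda>n. real n * (al n)\<^sup>2) \<longlonglongrightarrow> 0"
  shows "(\<lambda>n. (\<Sum>j<n. al (Suc j)) * al n) \<longlonglongrightarrow> 0"
proof (rule sq_tendsto_zero)
  show "(\<Sum>j<n. al (Suc j)) * al n \<ge> 0" for n using a0 by (simp add: sum_nonneg)
  have sa': "summable (\<lambda>n. (al (Suc n))\<^sup>2)" using sa summable_Suc_iff[of "\<lambda>n. (al n)\<^sup>2"] by simp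
  define T where "T = suminf (\<lambda>n. (al (Suc n))\<^sup>2)"
  have b: "((\<Sum>j<n. al (Suc j)) * al n)\<^sup>2 \<le> T * (real n * (al n)\<^sup>2)" for n
  proof -
    have "(\<Sum>j<n. al (Suc j))\<^sup>2 \<le> (\<Sum>j<n. (al (Suc j))\<^sup>2) * card {..<n}"
      by (rule sum_squared_le_sum_of_squares)
    also have "\<dots> \<le> T * real n"
    proof -
      have "(\<Sum>j<n. (al (Suc j))\<^sup>2) \<le> T"
        unfolding T_def using sa' by (rule sum_le_suminf) auto
      thus ?thesis by (simp add: mult_right_mono)
    qed
    finally have "(\<Sum>j<n. al (Suc j))\<^sup>2 * (al n)\<^sup>2 \<le> T * real n * (al n)\<^sup>2"
      by (rule mult_right_mono) simp
    thus ?thesis by (simp only: power_mult_distrib mult.assoc)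
  qed
  have lim: "(\<lambda>n. T * (real n * (al n)\<^sup>2)) \<longlonglongrightarrow> T * 0" by (rule tendsto_mult[OF tendsto_const na])
  show "(\<lambda>n. ((\<Sum>j<n. al (Suc j)) * al n)\<^sup>2) \<longlonglongrightarrow> 0"
  proof (rule Lim_null_comparison[of _ "\<lambda>n. T * (real n * (al n)\<^sup>2)"])
    show "\<forall>\<^sub>F n in sequentially. norm (((\<Sum>j<n. al (Suc j)) * al n)\<^sup>2) \<le> T * (real n * (al n)\<^sup>2)"
      using b by simp
    show "(\<lambda>n. T * (real n * (al n)\<^sup>2)) \<longlonglongrightarrow> 0" using lim by simp
  qed
qed

lemma norm_tendsto_from_sq:
  fixes v :: "nat \<Rightarrow> 'a::real_normed_vector"
  assumes "summable (\<lambda>n. (norm (v n))\<^sup>2)"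
  shows "v \<longlonglongrightarrow> 0"
proof -
  have "(\<lambda>n. (norm (v n))\<^sup>2) \<longlonglongrightarrow> 0" using assms by (rule summable_LIMSEQ_zero)
  hence "(\<lambda>n. norm (v n)) \<longlonglongrightarrow> 0" by (rule sq_tendsto_zero[rotated]) auto
  thus ?thesis by (simp add: tendsto_norm_zero_iff)
qed

lemma inner_tail_zero:
  fixes v L :: "nat \<Rightarrow> 'a::real_inner"
  assumes L: "\<And>n. L n = L0 + c *\<^sub>R (\<Sum>j<n. v (Suc j))" and c: "c \<ge> 0"
    and sv: "summable (\<lambda>n. (norm (v n))\<^sup>2)"
    and nv: "(\<lambda>n. real n * (norm (v n))\<^sup>2) \<longlonglongrightarrow> 0"
  shows "(\<lambda>n. inner (L n) (v n)) \<longlonglongrightarrow> 0"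
proof (rule Lim_null_comparison)
  define F where "F n = (\<Sum>j<n. norm (v (Suc j))) * norm (v n)" for n
  have F: "F \<longlonglongrightarrow> 0" unfolding F_def by (rule sum_tail_zero) (use sv nv in auto)
  have vn: "(\<lambda>n. norm (v n)) \<longlonglongrightarrow> 0" using norm_tendsto_from_sq[OF sv] by (simp add: tendsto_norm_zero_iff)
  show "((\<lambda>n. norm L0 * norm (v n) + c * F n) \<longlongrightarrow> 0) sequentially"
    using tendsto_add[OF tendsto_mult[OF tendsto_const vn] tendsto_mult[OF tendsto_const F], of "norm L0" c] by simp
  show "\<forall>\<^sub>F n in sequentially. norm (inner (L n) (v n)) \<le> norm L0 * norm (v n) + c * F n"
  proof (rule always_eventually, rule allI)
    fix n
    have "norm (inner (L n) (v n)) \<le> norm (L n) * norm (v n)"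
      using Cauchy_Schwarz_ineq2 by simp
    also have "norm (L n) \<le> norm L0 + c * (\<Sum>j<n. norm (v (Suc j)))"
    proof -
      have "norm (L n) \<le> norm L0 + norm (c *\<^sub>R (\<Sum>j<n. v (Suc j)))" unfolding L by (rule norm_triangle_ineq)
      also have "norm (c *\<^sub>R (\<Sum>j<n. v (Suc j))) \<le> c * (\<Sum>j<n. norm (v (Suc j)))"
        using mult_left_mono[OF norm_sum c] c by simp
      finally show ?thesis by simp
    qed
    hence "norm (L n) * norm (v n) \<le> (norm L0 + c * (\<Sum>j<n. norm (v (Suc j)))) * norm (v n)"
      by (rule mult_right_mono) simp
    also have "\<dots> = norm L0 * norm (v n) + c * F n" by (simp add: F_def algebra_simps)
    finally show "norm (inner (L n) (v n)) \<le> norm L0 * norm (v n) + c * F n" .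
  qed
qed


context admm begin

lemma lam_sum: "lam n = lam 0 + rho1 *\<^sub>R (\<Sum>j<n. a (Suc j))"
proof (induction n)
  case 0 then show ?case by simp
next
  case (Suc n)
  have "lam (Suc n) = lam n + rho1 *\<^sub>R a (Suc n)" using lam_diff[of n] by (simp add: algebra_simps)
  with Suc show ?case by (simp add: scaleR_add_right)
qed

lemma mu_sum: "mu n = mu 0 + rho2 *\<^sub>R (\<Sum>j<n. r (Suc j))"
proof (induction n)
  case 0 then show ?case by simp
next
  case (Suc n)
  have "mu (Suc n) = mu n + rho2 *\<^sub>R r (Suc n)" using mu_diff[of n] by (simp add: algebra_simps)
  with Suc show ?case by (simp add: scaleR_add_right)
qed

lemma a_summ: "summable (\<lambda>k. (norm (a k))\<^sup>2)"
proof (rule summable_comparison_test')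
  show "summable (\<lambda>k. P k / rho1)" using H_facts(1) by (rule summable_divide)
  show "norm ((norm (a n))\<^sup>2) \<le> P n / rho1" for n
    using rho by (simp add: P_def field_simps)
qed

lemma r_summ: "summable (\<lambda>k. (norm (r k))\<^sup>2)"
proof (rule summable_comparison_test')
  show "summable (\<lambda>k. 2 * P k / rho2)"
    using summable_divide[OF summable_mult[OF H_facts(1), of 2], of rho2] by simp
  show "norm ((norm (r n))\<^sup>2) \<le> 2 * P n / rho2" for n
    using rho by (simp add: P_def field_simps)
qed

lemma d_summ: "summable (\<lambda>k. (norm (d k))\<^sup>2)" by (rule S_facts(1))

lemma S_summ: "summable S"
proof -
  have "summable (\<lambda>k. rho1/2*(norm (a k))\<^sup>2 + rho2/2*(norm (r k))\<^sup>2 + rho2/2*(norm (d k))\<^sup>2)"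
    using summable_add[OF summable_add[OF summable_mult[OF a_summ] summable_mult[OF r_summ]] summable_mult[OF d_summ]] .
  thus ?thesis unfolding S_def[abs_def] .
qed

lemma kS: "(\<lambda>k. real k * S k) \<longlonglongrightarrow> 0"
proof -
  have ss: "summable (\<lambda>k. S (Suc k))" using S_summ summable_Suc_iff[of S] by simp
  have 1: "(\<lambda>k. real k * S (Suc k)) \<longlonglongrightarrow> 0"
  proof (rule kmono)
    show "0 \<le> S (Suc k)" for k by (rule S_nonneg)
    show "S (Suc (Suc k)) \<le> S (Suc k)" for k
    proof -
      have "0 \<le> 2 * c0 * (norm (d (Suc (Suc k))))\<^sup>2" using A2(3) by simp
      thus ?thesis using S_step[of "Suc k"] by simp
    qed
  qed (rule ss)
  have 2: "(\<lambda>k. S (Suc k)) \<longlonglongrightarrow> 0" using ss by (rule summable_LIMSEQ_zero)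
  have "(\<lambda>k. real k * S (Suc k) + S (Suc k)) \<longlonglongrightarrow> 0 + 0" by (rule tendsto_add[OF 1 2])
  hence "(\<lambda>k. real (Suc k) * S (Suc k)) \<longlonglongrightarrow> 0" by (simp add: algebra_simps)
  thus ?thesis by (rule LIMSEQ_imp_Suc)
qed

lemma ka: "(\<lambda>k. real k * (norm (a k))\<^sup>2) \<longlonglongrightarrow> 0"
proof (rule Lim_null_comparison)
  show "(\<lambda>k. (2/rho1) * (real k * S k)) \<longlonglongrightarrow> 0" using tendsto_mult[OF tendsto_const kS, of "2/rho1"] by simp
  show "\<forall>\<^sub>F k in sequentially. norm (real k * (norm (a k))\<^sup>2) \<le> (2/rho1) * (real k * S k)"
  proof (rule always_eventually, rule allI)
    fix k
    have "rho1/2*(norm (a k))\<^sup>2 \<le> S k" using rho unfolding S_def by simp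
    hence "(norm (a k))\<^sup>2 \<le> (2/rho1) * S k" using rho by (simp add: field_simps)
    hence "real k * (norm (a k))\<^sup>2 \<le> real k * ((2/rho1) * S k)" by (rule mult_left_mono) simp
    thus "norm (real k * (norm (a k))\<^sup>2) \<le> (2/rho1) * (real k * S k)" by (simp add: algebra_simps)
  qed
qed

lemma kr: "(\<lambda>k. real k * (norm (r k))\<^sup>2) \<longlonglongrightarrow> 0"
proof (rule Lim_null_comparison)
  show "(\<lambda>k. (2/rho2) * (real k * S k)) \<longlonglongrightarrow> 0" using tendsto_mult[OF tendsto_const kS, of "2/rho2"] by simp
  show "\<forall>\<^sub>F k in sequentially. norm (real k * (norm (r k))\<^sup>2) \<le> (2/rho2) * (real k * S k)"
  proof (rule always_eventually, rule allI)
    fix k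
    have "rho2/2*(norm (r k))\<^sup>2 \<le> S k" using rho unfolding S_def by simp
    hence "(norm (r k))\<^sup>2 \<le> (2/rho2) * S k" using rho by (simp add: field_simps)
    hence "real k * (norm (r k))\<^sup>2 \<le> real k * ((2/rho2) * S k)" by (rule mult_left_mono) simp
    thus "norm (real k * (norm (r k))\<^sup>2) \<le> (2/rho2) * (real k * S k)" by (simp add: algebra_simps)
  qed
qed

lemma lam_a0: "(\<lambda>k. inner (lam k) (a k)) \<longlonglongrightarrow> 0"
  by (rule inner_tail_zero[OF lam_sum _ a_summ ka]) (use rho in simp)
lemma mu_r0: "(\<lambda>k. inner (mu k) (r k)) \<longlonglongrightarrow> 0"
  by (rule inner_tail_zero[OF mu_sum _ r_summ kr]) (use rho in simp)

lemma a0: "a \<longlonglongrightarrow> 0" by (rule norm_tendsto_from_sq[OF a_summ])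
lemma r0: "r \<longlonglongrightarrow> 0" by (rule norm_tendsto_from_sq[OF r_summ])
lemma d0: "d \<longlonglongrightarrow> 0" by (rule norm_tendsto_from_sq[OF d_summ])

end


context admm begin

lemma H_bnd: obtains HB where "\<And>k. H k \<le> HB"
proof -
  obtain K where "\<forall>k. norm (H k) \<le> K" using convergent_imp_Bseq[OF H_facts(2)] by (auto simp: Bseq_def)
  hence "H k \<le> K" for k by (metis abs_le_D1 real_norm_def)
  thus ?thesis using that by blast
qed

lemma ys_bnd: obtains M where "\<And>k. k \<ge> 1 \<Longrightarrow> norm (ys - y k) \<le> M"
proof -
  obtain HB where HB: "\<And>k. H k \<le> HB" using H_bnd by blast
  define C where "C = 2 * HB + 2 * (rho2\<^sup>2/(2*c0) + rho2) * Bd"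
  have "(norm (ys - y k))\<^sup>2 \<le> C / c0" if k: "k \<ge> 1" for k
  proof -
    have "c0 * (norm (ys - y k))\<^sup>2 \<le> C"
      using D_lower[OF k] D_upper[OF k] HB[of k] unfolding C_def by linarith
    thus ?thesis using A2(3) by (simp add: field_simps)
  qed
  hence "norm (ys - y k) \<le> sqrt (C / c0)" if "k \<ge> 1" for k using that by (intro real_le_rsqrt) auto
  thus ?thesis using that by blast
qed

lemma w_bnd: obtains Wb where "Wb \<ge> 0" "\<And>k. k \<ge> 1 \<Longrightarrow> norm (w k) \<le> Wb"
proof -
  obtain M where M: "\<And>k. k \<ge> 1 \<Longrightarrow> norm (ys - y k) \<le> M" using ys_bnd by blast
  have "norm (w k) \<le> M + sqrt Bd" if k: "k \<ge> 1" for k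
  proof -
    have "norm (w k) \<le> norm (ys - y k) + norm (r k)" unfolding w_split by (rule norm_triangle_ineq4)
    moreover have "norm (r k) \<le> sqrt Bd" using r_bnd[OF k] by (rule real_le_rsqrt)
    ultimately show ?thesis using M[OF k] by linarith
  qed
  moreover have "M + sqrt Bd \<ge> 0"
  proof -
    have "0 \<le> norm (ys - y 1)" by simp
    moreover have "0 \<le> sqrt Bd" using Bd_nonneg by simp
    ultimately show ?thesis using M[of 1] by linarith
  qed
  ultimately show ?thesis using that by blast
qed

lemma dw0: "(\<lambda>k. inner (d k) (w k)) \<longlonglongrightarrow> 0"
proof -
  obtain Wb where Wb: "Wb \<ge> 0" "\<And>k. k \<ge> 1 \<Longrightarrow> norm (w k) \<le> Wb" using w_bnd by blast
  have dn: "(\<lambda>k. norm (d k)) \<longlonglongrightarrow> 0" using d0 by (simp add: tendsto_norm_zero_iff)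
  show ?thesis
  proof (rule Lim_null_comparison)
    show "(\<lambda>k. norm (d k) * Wb) \<longlonglongrightarrow> 0" using tendsto_mult[OF dn tendsto_const, of Wb] by simp
    show "\<forall>\<^sub>F k in sequentially. norm (inner (d k) (w k)) \<le> norm (d k) * Wb"
      unfolding eventually_sequentially
    proof (intro exI allI impI)
      fix k :: nat assume k: "k \<ge> 1"
      have "norm (inner (d k) (w k)) \<le> norm (d k) * norm (w k)" using Cauchy_Schwarz_ineq2 by simp
      also have "\<dots> \<le> norm (d k) * Wb" using Wb(2)[OF k] by (rule mult_left_mono) simp
      finally show "norm (inner (d k) (w k)) \<le> norm (d k) * Wb" .
    qed
  qed
qed

lemma D_conv: obtains LD where "Dk \<longlonglongrightarrow> LD"
proof -
  obtain LH where LH: "H \<longlonglongrightarrow> LH" using H_facts(2) by (auto simp: convergent_def)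
  have rn: "(\<lambda>k. (norm (r k))\<^sup>2) \<longlonglongrightarrow> 0" using r_summ by (rule summable_LIMSEQ_zero)
  have "(\<lambda>k. H k - rho2/4 * (norm (r k))\<^sup>2 + rho2 * inner (d k) (w k)) \<longlonglongrightarrow> LH - rho2/4 * 0 + rho2 * 0"
    by (rule tendsto_add[OF tendsto_diff[OF LH tendsto_mult[OF tendsto_const rn]] tendsto_mult[OF tendsto_const dw0]])
  moreover have "(\<lambda>k. H k - rho2/4 * (norm (r k))\<^sup>2 + rho2 * inner (d k) (w k)) = Dk"
    by (auto simp: H_def)
  ultimately show ?thesis using that by auto
qed

lemma E_id: "k \<ge> 1 \<Longrightarrow> inner (mu k) (ys - y k) = inner (lam k) (a k) + inner (mu k) (r k) - rho2 * inner (d k) (w k)"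
proof -
  assume k: "k \<ge> 1"
  have zD: "xs - x k \<in> D" using xs_sol(1) xD1[OF k] D_sub by (simp add: subspace_diff)
  have Az: "A (xs - x k) = - a k" by (simp add: A_diff a_def xs_sol(2))
  have Wz: "W (xs - x k) = w k" by (simp add: W_diff[OF xs_sol(1) xD1[OF k]] w_def ys_def)
  have "inner (lam k) (- a k) + inner (mu k + rho2 *\<^sub>R d k) (w k) = 0"
    using X1[OF k zD] unfolding Az Wz .
  hence 1: "- inner (lam k) (a k) + inner (mu k) (w k) + rho2 * inner (d k) (w k) = 0"
    by (simp add: inner_add_left)
  have "inner (mu k) (ys - y k) = inner (mu k) (w k) + inner (mu k) (r k)"
    by (simp add: w_def r_def inner_diff_right)
  thus ?thesis using 1 by linarith
qed

lemma E0: "(\<lambda>k. inner (mu k) (ys - y k)) \<longlonglongrightarrow> 0"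
proof -
  have "(\<lambda>k. inner (lam k) (a k) + inner (mu k) (r k) - rho2 * inner (d k) (w k)) \<longlonglongrightarrow> 0 + 0 - rho2 * 0"
    by (rule tendsto_diff[OF tendsto_add[OF lam_a0 mu_r0] tendsto_mult[OF tendsto_const dw0]])
  hence "(\<lambda>k. inner (lam k) (a k) + inner (mu k) (r k) - rho2 * inner (d k) (w k)) \<longlonglongrightarrow> 0" by simp
  hence "(\<lambda>k. inner (lam (Suc k)) (a (Suc k)) + inner (mu (Suc k)) (r (Suc k)) - rho2 * inner (d (Suc k)) (w (Suc k))) \<longlonglongrightarrow> 0"
    by (rule LIMSEQ_Suc)
  hence "(\<lambda>k. inner (mu (Suc k)) (ys - y (Suc k))) \<longlonglongrightarrow> 0"
    using E_id by simp
  thus ?thesis by (rule LIMSEQ_imp_Suc)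
qed

end



lemma abs_inner_half:
  fixes u v :: "'a::real_inner"
  shows "\<bar>inner u v\<bar> \<le> (norm u)\<^sup>2/2 + (norm v)\<^sup>2/2"
proof -
  have 1: "inner u v \<le> (norm u)\<^sup>2/2 + (norm v)\<^sup>2/2" by (rule young_half)
  have "inner u (- v) \<le> (norm u)\<^sup>2/2 + (norm (- v))\<^sup>2/2" by (rule young_half)
  hence 2: "- inner u v \<le> (norm u)\<^sup>2/2 + (norm v)\<^sup>2/2" by simp
  show ?thesis using 1 2 by linarith
qed

context admm begin

definition "q k = rho1 * (norm (a k))\<^sup>2 + rho2 * (norm (r k))\<^sup>2"

lemma q_nonneg: "q k \<ge> 0" using rho by (simp add: q_def)

lemma q_summ: "summable q"
  unfolding q_def[abs_def]
  using summable_add[OF summable_mult[OF a_summ, of rho1] summable_mult[OF r_summ, of rho2]] .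

lemma Breg:
  assumes p: "p \<ge> 1" and l: "l \<ge> 1"
  shows "c0 * (norm (y l - y p))\<^sup>2 \<le> Dk p - Dk l - (inner (lam l - lam p) (a l) + inner (mu l - mu p) (r l))
           + rho2 * inner (d l - d p) (w l)"
proof -
  have B: "fr (y l) \<ge> fr (y p) + inner (mu p) (y l - y p) + c0 * (norm (y l - y p))\<^sup>2"
    using sub1[OF p fy1[OF l]] .
  have zD: "xs - x l \<in> D" using xs_sol(1) xD1[OF l] D_sub by (simp add: subspace_diff)
  have Az: "A (xs - x l) = - a l" by (simp add: A_diff a_def xs_sol(2))
  have Wz: "W (xs - x l) = w l" by (simp add: W_diff[OF xs_sol(1) xD1[OF l]] w_def ys_def)
  have X: "- inner (lam l - lam p) (a l) + inner (mu l - mu p) (w l) + rho2 * inner (d l - d p) (w l) = 0"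
    using Xdiff[OF p l zD] unfolding Az Wz by simp
  have s1: "inner (mu l - mu p) (ys - y l) = inner (mu l - mu p) (w l) + inner (mu l - mu p) (r l)"
    by (simp add: w_def r_def inner_diff_right)
  have s2: "inner (mu l - mu p) (ys - y l) = inner (mu l) ys - inner (mu l) (y l) - inner (mu p) ys + inner (mu p) (y l)"
    by (simp add: inner_diff_left inner_diff_right)
  have s3: "inner (mu p) (y l - y p) = inner (mu p) (y l) - inner (mu p) (y p)"
    by (simp add: inner_diff_right)
  have s4: "Dk p = fr ys - fr (y p) - (inner (mu p) ys - inner (mu p) (y p))"
    unfolding Dk_def by (simp add: inner_diff_right)
  have s5: "Dk l = fr ys - fr (y l) - (inner (mu l) ys - inner (mu l) (y l))"
    unfolding Dk_def by (simp add: inner_diff_right)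
  show ?thesis using B X s1 s2 s3 s4 s5 by linarith
qed

lemma lam_diff_sum: "p \<le> l \<Longrightarrow> lam l - lam p = rho1 *\<^sub>R (\<Sum>j\<in>{p..<l}. a (Suc j))"
proof -
  assume pl: "p \<le> l"
  have "(\<Sum>j<l. a (Suc j)) = (\<Sum>j<p. a (Suc j)) + (\<Sum>j\<in>{p..<l}. a (Suc j))"
    using pl by (simp add: lessThan_atLeast0 sum.atLeastLessThan_concat)
  thus ?thesis by (subst (1 2) lam_sum) (simp add: scaleR_add_right)
qed

lemma mu_diff_sum: "p \<le> l \<Longrightarrow> mu l - mu p = rho2 *\<^sub>R (\<Sum>j\<in>{p..<l}. r (Suc j))"
proof -
  assume pl: "p \<le> l"
  have "(\<Sum>j<l. r (Suc j)) = (\<Sum>j<p. r (Suc j)) + (\<Sum>j\<in>{p..<l}. r (Suc j))"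
    using pl by (simp add: lessThan_atLeast0 sum.atLeastLessThan_concat)
  thus ?thesis by (subst (1 2) mu_sum) (simp add: scaleR_add_right)
qed

definition "Y p l = inner (lam l - lam p) (a l) + inner (mu l - mu p) (r l)"

lemma Y_sum: "p \<le> l \<Longrightarrow> Y p l = (\<Sum>j\<in>{p..<l}. rho1 * inner (a (Suc j)) (a l) + rho2 * inner (r (Suc j)) (r l))"
  unfolding Y_def
  by (simp add: lam_diff_sum mu_diff_sum inner_sum_left sum.distrib sum_distrib_left)

lemma term_bound:
  assumes "q l \<le> q j"
  shows "\<bar>rho1 * inner (a j) (a l) + rho2 * inner (r j) (r l)\<bar> \<le> q j"
proof -
  have 1: "\<bar>inner (a j) (a l)\<bar> \<le> (norm (a j))\<^sup>2/2 + (norm (a l))\<^sup>2/2" by (rule abs_inner_half)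
  have 2: "\<bar>inner (r j) (r l)\<bar> \<le> (norm (r j))\<^sup>2/2 + (norm (r l))\<^sup>2/2" by (rule abs_inner_half)
  have "\<bar>rho1 * inner (a j) (a l) + rho2 * inner (r j) (r l)\<bar> \<le> rho1 * \<bar>inner (a j) (a l)\<bar> + rho2 * \<bar>inner (r j) (r l)\<bar>"
    using abs_triangle_ineq[of "rho1 * inner (a j) (a l)" "rho2 * inner (r j) (r l)"] rho
    by (simp add: abs_mult)
  also have "\<dots> \<le> rho1 * ((norm (a j))\<^sup>2/2 + (norm (a l))\<^sup>2/2) + rho2 * ((norm (r j))\<^sup>2/2 + (norm (r l))\<^sup>2/2)"
    using rho 1 2 by (intro add_mono mult_left_mono) auto
  also have "\<dots> = (q j + q l)/2" by (simp add: q_def field_simps)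
  also have "\<dots> \<le> q j" using assms by simp
  finally show ?thesis .
qed

lemma Y_bound1:
  assumes pl: "p \<le> l" and m: "\<And>j. j \<in> {p..<l} \<Longrightarrow> q l \<le> q (Suc j)"
  shows "\<bar>Y p l\<bar> \<le> (\<Sum>j\<in>{p..<l}. q (Suc j))"
proof -
  have "\<bar>Y p l\<bar> \<le> (\<Sum>j\<in>{p..<l}. \<bar>rho1 * inner (a (Suc j)) (a l) + rho2 * inner (r (Suc j)) (r l)\<bar>)"
    unfolding Y_sum[OF pl] by (rule sum_abs)
  also have "\<dots> \<le> (\<Sum>j\<in>{p..<l}. q (Suc j))"
    by (rule sum_mono) (rule term_bound[OF m])
  finally show ?thesis .
qed

lemma Y_swap: "Y p l = - (inner (lam p - lam l) (a l) + inner (mu p - mu l) (r l))"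
  unfolding Y_def by (simp add: inner_diff_left)

lemma Y_bound2:
  assumes lp: "l \<le> p" and m: "\<And>j. j \<in> {l..<p} \<Longrightarrow> q l \<le> q (Suc j)"
  shows "\<bar>Y p l\<bar> \<le> (\<Sum>j\<in>{l..<p}. q (Suc j))"
proof -
  have e: "inner (lam p - lam l) (a l) + inner (mu p - mu l) (r l)
     = (\<Sum>j\<in>{l..<p}. rho1 * inner (a (Suc j)) (a l) + rho2 * inner (r (Suc j)) (r l))"
    by (simp add: lam_diff_sum[OF lp] mu_diff_sum[OF lp] inner_sum_left sum.distrib sum_distrib_left)
  have "\<bar>Y p l\<bar> \<le> (\<Sum>j\<in>{l..<p}. \<bar>rho1 * inner (a (Suc j)) (a l) + rho2 * inner (r (Suc j)) (r l)\<bar>)"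
    unfolding Y_swap e abs_minus_cancel by (rule sum_abs)
  also have "\<dots> \<le> (\<Sum>j\<in>{l..<p}. q (Suc j))"
    by (rule sum_mono) (rule term_bound[OF m])
  finally show ?thesis .
qed

end


context admm begin

lemma Y_small:
  assumes "lo \<le> p" "p \<le> hi" "lo \<le> l" "l \<le> hi" and mn: "\<And>j. j \<in> {lo..hi} \<Longrightarrow> q l \<le> q j"
  shows "\<bar>Y p l\<bar> \<le> (\<Sum>j\<in>{lo..<hi}. q (Suc j))"
proof (cases "p \<le> l")
  case True
  have "\<bar>Y p l\<bar> \<le> (\<Sum>j\<in>{p..<l}. q (Suc j))"
    by (rule Y_bound1[OF True]) (use assms in \<open>auto intro: mn\<close>)
  also have "\<dots> \<le> (\<Sum>j\<in>{lo..<hi}. q (Suc j))"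
    by (rule sum_mono2) (use assms q_nonneg in auto)
  finally show ?thesis .
next
  case False
  hence lp: "l \<le> p" by simp
  have "\<bar>Y p l\<bar> \<le> (\<Sum>j\<in>{l..<p}. q (Suc j))"
    by (rule Y_bound2[OF lp]) (use assms in \<open>auto intro: mn\<close>)
  also have "\<dots> \<le> (\<Sum>j\<in>{lo..<hi}. q (Suc j))"
    by (rule sum_mono2) (use assms q_nonneg in auto)
  finally show ?thesis .
qed

lemma pair_close:
  assumes p: "p \<ge> 1" and l: "l \<ge> 1" and Wb: "Wb \<ge> 0" "\<And>k. k \<ge> 1 \<Longrightarrow> norm (w k) \<le> Wb"
    and D: "\<bar>Dk p - Dk l\<bar> < dl/3" and Y: "\<bar>Y p l\<bar> < dl/3"
    and dd: "rho2 * Wb * (norm (d l) + norm (d p)) < dl/3"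
  shows "c0 * (norm (y l - y p))\<^sup>2 < dl"
proof -
  have B: "c0 * (norm (y l - y p))\<^sup>2 \<le> Dk p - Dk l - Y p l + rho2 * inner (d l - d p) (w l)"
    using Breg[OF p l] unfolding Y_def .
  have "inner (d l - d p) (w l) \<le> norm (d l - d p) * norm (w l)"
    by (rule order_trans[OF abs_ge_self Cauchy_Schwarz_ineq2])
  also have "\<dots> \<le> (norm (d l) + norm (d p)) * Wb"
    by (rule mult_mono) (use norm_triangle_ineq4 Wb(2)[OF l] Wb(1) in auto)
  finally have "rho2 * inner (d l - d p) (w l) \<le> rho2 * ((norm (d l) + norm (d p)) * Wb)"
    using rho by (intro mult_left_mono) auto
  hence "rho2 * inner (d l - d p) (w l) < dl/3" using dd by (simp add: algebra_simps)
  thus ?thesis using B D Y by linarith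
qed

lemma y_cauchy: "Cauchy y"
proof (rule CauchyI)
  fix eps :: real assume eps: "0 < eps"
  define dl where "dl = c0 * (eps/2)\<^sup>2"
  have dl: "dl > 0" using eps A2(3) by (simp add: dl_def)
  obtain LD where LD: "Dk \<longlonglongrightarrow> LD" using D_conv by blast
  obtain Wb where Wb: "Wb \<ge> 0" "\<And>k. k \<ge> 1 \<Longrightarrow> norm (w k) \<le> Wb" using w_bnd by blast
  obtain N1 where N1: "\<And>k. k \<ge> N1 \<Longrightarrow> norm (Dk k - LD) < dl/6"
    using LD dl unfolding LIMSEQ_iff by (meson divide_pos_pos zero_less_numeral)
  define eta where "eta = dl / (6 * (rho2 * Wb + 1))"
  have "rho2 * Wb \<ge> 0" using rho Wb by simp
  hence den: "6 * (rho2 * Wb + 1) > 0" by simp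
  have eta: "eta > 0" unfolding eta_def using dl den by (rule divide_pos_pos)
  obtain N2 where N2: "\<And>k. k \<ge> N2 \<Longrightarrow> norm (d k - 0) < eta"
    using d0 eta unfolding LIMSEQ_iff by blast
  have sq: "summable (\<lambda>j. q (Suc j))" using q_summ summable_Suc_iff[of q] by simp
  obtain N3 where N3: "\<And>m n. m \<ge> N3 \<Longrightarrow> norm (sum (\<lambda>j. q (Suc j)) {m..<n}) < dl/3"
    using sq dl unfolding summable_Cauchy by (meson divide_pos_pos zero_less_numeral)
  define M where "M = max (max N1 N2) (max N3 1)"
  have dsmall: "rho2 * Wb * norm (d k) < dl/6" if "k \<ge> M" for k
  proof -
    have "norm (d k) < eta" using N2[of k] that by (simp add: M_def)
    hence "(rho2 * Wb + 1) * norm (d k) \<le> (rho2 * Wb + 1) * eta"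
      using rho Wb by (intro mult_left_mono) auto
    also have "\<dots> = dl/6"
    proof -
      have g: "\<And>K::real. K > 0 \<Longrightarrow> K * (dl/(6*K)) = dl/6" by simp
      have "rho2 * Wb + 1 > 0" using den by simp
      thus ?thesis unfolding eta_def by (rule g)
    qed
    finally have "(rho2 * Wb + 1) * norm (d k) \<le> dl/6" .
    thus ?thesis
    proof (cases "norm (d k) = 0")
      case True thus ?thesis using dl by simp
    next
      case False
      hence "norm (d k) > 0" by simp
      hence "rho2 * Wb * norm (d k) < (rho2 * Wb + 1) * norm (d k)" by (simp add: algebra_simps)
      thus ?thesis using \<open>(rho2 * Wb + 1) * norm (d k) \<le> dl/6\<close> by linarith
    qed
  qed
  show "\<exists>M. \<forall>m\<ge>M. \<forall>n\<ge>M. norm (y m - y n) < eps"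
  proof (intro exI allI impI)
    fix m n assume m: "m \<ge> M" and n: "n \<ge> M"
    define lo where "lo = min m n"
    define hi where "hi = max m n"
    have fin: "finite (q ` {lo..hi})" and ne: "q ` {lo..hi} \<noteq> {}" by (auto simp: lo_def hi_def)
    obtain l where l: "l \<in> {lo..hi}" "q l = Min (q ` {lo..hi})" using Min_in[OF fin ne] by auto
    have mn: "q l \<le> q j" if "j \<in> {lo..hi}" for j using l(2) fin that by simp
    have loM: "lo \<ge> M" using m n by (simp add: lo_def)
    have sumsmall: "(\<Sum>j\<in>{lo..<hi}. q (Suc j)) < dl/3"
      using N3[of lo hi] loM by (simp add: M_def)
    have close: "c0 * (norm (y l - y p))\<^sup>2 < dl" if p: "p \<in> {m, n}" for p
    proof -
      have pM: "p \<ge> M" using p m n by auto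
      have lM: "l \<ge> M" using l(1) loM by simp
      have p1: "p \<ge> 1" using pM by (simp add: M_def)
      have l1: "l \<ge> 1" using lM by (simp add: M_def)
      have n1: "\<bar>Dk p - LD\<bar> < dl/6" using N1[of p] pM by (simp add: M_def)
      have n2: "\<bar>Dk l - LD\<bar> < dl/6" using N1[of l] lM by (simp add: M_def)
      have "\<bar>(Dk p - LD) - (Dk l - LD)\<bar> \<le> \<bar>Dk p - LD\<bar> + \<bar>Dk l - LD\<bar>" by (rule abs_triangle_ineq4)
      hence D: "\<bar>Dk p - Dk l\<bar> < dl/3" using n1 n2 by simp
      have "lo \<le> p" "p \<le> hi" using p by (auto simp: lo_def hi_def)
      hence "\<bar>Y p l\<bar> \<le> (\<Sum>j\<in>{lo..<hi}. q (Suc j))"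
        using l(1) by (intro Y_small mn) auto
      hence Y: "\<bar>Y p l\<bar> < dl/3" using sumsmall by linarith
      have "rho2 * Wb * (norm (d l) + norm (d p)) < dl/3"
        using dsmall[OF lM] dsmall[OF pM] by (simp add: algebra_simps)
      note pc = pair_close[OF p1 l1 Wb D Y this]
      show ?thesis by (rule pc)
    qed
    have "norm (y l - y p) < eps/2" if p: "p \<in> {m, n}" for p
    proof -
      have "c0 * (norm (y l - y p))\<^sup>2 < c0 * (eps/2)\<^sup>2" using close[OF p] by (simp add: dl_def)
      hence "(norm (y l - y p))\<^sup>2 < (eps/2)\<^sup>2" using A2(3) by simp
      moreover have "eps/2 \<ge> 0" using eps by simp
      ultimately show ?thesis by (rule power_less_imp_less_base)
    qed
    hence "norm (y l - y m) < eps/2" "norm (y l - y n) < eps/2" by auto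
    moreover have "norm (y m - y n) \<le> norm (y l - y m) + norm (y l - y n)"
    proof -
      have "y m - y n = (y l - y n) - (y l - y m)" by simp
      hence "norm (y m - y n) \<le> norm (y l - y n) + norm (y l - y m)"
        by (metis norm_triangle_ineq4)
      thus ?thesis by simp
    qed
    ultimately show "norm (y m - y n) < eps" by linarith
  qed
qed

end


context admm begin

lemma lsc_limit:
  assumes yl: "(g :: nat \<Rightarrow> 'y) \<longlonglongrightarrow> yb" and ev: "\<forall>\<^sub>F k in sequentially. f (g k) \<le> ereal (u k)"
    and ul: "u \<longlonglongrightarrow> U"
  shows "f yb \<le> ereal U"
proof -
  have le: "f yb \<le> ereal (U + ep)" if ep: "ep > 0" for ep
  proof -
    have "\<forall>\<^sub>F k in sequentially. u k < U + ep"
      using ul ep by (intro order_tendstoD(2)) auto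
    hence "\<forall>\<^sub>F k in sequentially. g k \<in> {v. f v \<le> ereal (U + ep)}"
      using ev
    proof eventually_elim
      case (elim k)
      have "ereal (u k) \<le> ereal (U + ep)" using elim(1) by simp
      hence "f (g k) \<le> ereal (U + ep)" using elim(2) by (rule order_trans[rotated])
      thus ?case by simp
    qed
    moreover have "closed {v. f v \<le> ereal (U + ep)}" using A2(2) by (simp add: lsc_fun_def)
    ultimately have "yb \<in> {v. f v \<le> ereal (U + ep)}"
      using yl by (intro Lim_in_closed_set) auto
    thus ?thesis by simp
  qed
  have "f yb \<le> ereal (U + 1)" by (rule le) simp
  hence "f yb \<noteq> \<infinity>" by auto
  hence fb: "f yb = ereal (fr yb)" by (rule fin_eq)
  have "fr yb \<le> U"
  proof (rule field_le_epsilon)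
    fix ep :: real assume "ep > 0"
    hence "f yb \<le> ereal (U + ep)" by (rule le)
    thus "fr yb \<le> U + ep" using fb by simp
  qed
  thus ?thesis using fb by simp
qed

lemma main_result:
  "x \<longlonglongrightarrow> xs \<and> y \<longlonglongrightarrow> W xs \<and> (\<lambda>k. W (x k)) \<longlonglongrightarrow> W xs
         \<and> (\<lambda>k. f (y k)) \<longlonglongrightarrow> f (W xs)
         \<and> (\<lambda>k. bregman f (mu k) (W xs) (y k)) \<longlonglongrightarrow> 0"
proof -
  obtain yb where yb: "y \<longlonglongrightarrow> yb" using Cauchy_convergent[OF y_cauchy] by (auto simp: convergent_def)
  have Wxy: "W (x k) = y k + r k" for k by (simp add: r_def)
  have Wx: "(\<lambda>k. W (x k)) \<longlonglongrightarrow> yb"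
    unfolding Wxy using tendsto_add[OF yb r0] by simp
  have Axa: "A (x k) = a k + b" for k by (simp add: a_def)
  have Ax: "(\<lambda>k. A (x k)) \<longlonglongrightarrow> b"
    unfolding Axa using tendsto_add[OF a0 tendsto_const[of b]] by simp
  have xc: "Cauchy x"
  proof (rule CauchyI)
    fix eps :: real assume eps: "eps > 0"
    define eta where "eta = sqrt (c1/2) * eps"
    have eta: "eta > 0" using eps A4(1) by (simp add: eta_def)
    have eta2: "2 * eta\<^sup>2 = c1 * eps\<^sup>2" using A4(1) by (simp add: eta_def power_mult_distrib)
    obtain N1 where N1: "\<And>m n. m \<ge> N1 \<Longrightarrow> n \<ge> N1 \<Longrightarrow> norm (A (x m) - A (x n)) < eta"
      using convergent_Cauchy[of "\<lambda>k. A (x k)"] Ax eta unfolding Cauchy_def dist_norm convergent_def by blast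
    obtain N2 where N2: "\<And>m n. m \<ge> N2 \<Longrightarrow> n \<ge> N2 \<Longrightarrow> norm (W (x m) - W (x n)) < eta"
      using convergent_Cauchy[of "\<lambda>k. W (x k)"] Wx eta unfolding Cauchy_def dist_norm convergent_def by blast
    show "\<exists>M. \<forall>m\<ge>M. \<forall>n\<ge>M. norm (x m - x n) < eps"
    proof (intro exI allI impI)
      fix m n assume m: "m \<ge> max (max N1 N2) 1" and n: "n \<ge> max (max N1 N2) 1"
      have zD: "x m - x n \<in> D" using xD1[of m] xD1[of n] m n D_sub by (simp add: subspace_diff)
      have "c1 * (norm (x m - x n))\<^sup>2 \<le> (norm (A (x m - x n)))\<^sup>2 + (norm (W (x m - x n)))\<^sup>2"
        using A4(2) zD by blast
      also have "\<dots> = (norm (A (x m) - A (x n)))\<^sup>2 + (norm (W (x m) - W (x n)))\<^sup>2"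
        using xD1[of m] xD1[of n] m n by (simp add: A_diff W_diff)
      also have "\<dots> < eta\<^sup>2 + eta\<^sup>2"
        using N1[of m n] N2[of m n] m n
        by (intro add_strict_mono power_strict_mono) auto
      also have "\<dots> = c1 * eps\<^sup>2" using eta2 by simp
      finally have "(norm (x m - x n))\<^sup>2 < eps\<^sup>2" using A4(1) by simp
      moreover have "eps \<ge> 0" using eps by simp
      ultimately show "norm (x m - x n) < eps" by (rule power_less_imp_less_base)
    qed
  qed
  obtain xb where xb: "x \<longlonglongrightarrow> xb" using Cauchy_convergent[OF xc] by (auto simp: convergent_def)
  have G: "closed {(z, W z) | z. z \<in> D}" using A3 by (simp add: dd_closed_linear_op_def)
  have "(xb, yb) \<in> {(z, W z) | z. z \<in> D}"
  proof (rule closed_sequentially[OF G])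
    show "(x (Suc k), W (x (Suc k))) \<in> {(z, W z) | z. z \<in> D}" for k using xD by blast
    show "(\<lambda>k. (x (Suc k), W (x (Suc k)))) \<longlonglongrightarrow> (xb, yb)"
      by (rule tendsto_Pair[OF LIMSEQ_Suc[OF xb] LIMSEQ_Suc[OF Wx]])
  qed
  hence xbD: "xb \<in> D" and Wxb: "W xb = yb" by auto
  have "(\<lambda>k. A (x k)) \<longlonglongrightarrow> A xb" using A1 xb by (rule bounded_linear.tendsto)
  hence Axb: "A xb = b" using Ax LIMSEQ_unique by blast
  obtain LD where LD: "Dk \<longlonglongrightarrow> LD" using D_conv by blast
  have fyk: "fr (y k) = fr ys - Dk k - inner (mu k) (ys - y k)" for k by (simp add: Dk_def)
  have ev1: "\<forall>\<^sub>F k in sequentially. f (y k) \<le> ereal (fr ys - c0 * (norm (ys - y k))\<^sup>2 - inner (mu k) (ys - y k))"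
    unfolding eventually_sequentially
  proof (intro exI allI impI)
    fix k :: nat assume k: "k \<ge> 1"
    show "f (y k) \<le> ereal (fr ys - c0 * (norm (ys - y k))\<^sup>2 - inner (mu k) (ys - y k))"
      using fy1[OF k] D_lower[OF k] fyk[of k] by simp
  qed
  have ul1: "(\<lambda>k. fr ys - c0 * (norm (ys - y k))\<^sup>2 - inner (mu k) (ys - y k)) \<longlonglongrightarrow> fr ys - c0 * (norm (ys - yb))\<^sup>2 - 0"
  proof -
    have "(\<lambda>k. ys - y k) \<longlonglongrightarrow> ys - yb" by (rule tendsto_diff[OF tendsto_const yb])
    hence "(\<lambda>k. norm (ys - y k)) \<longlonglongrightarrow> norm (ys - yb)" by (rule tendsto_norm)
    hence "(\<lambda>k. (norm (ys - y k))\<^sup>2) \<longlonglongrightarrow> (norm (ys - yb))\<^sup>2" by (rule tendsto_power)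
    hence "(\<lambda>k. c0 * (norm (ys - y k))\<^sup>2) \<longlonglongrightarrow> c0 * (norm (ys - yb))\<^sup>2" by (rule tendsto_mult[OF tendsto_const])
    thus ?thesis by (rule tendsto_diff[OF tendsto_diff[OF tendsto_const] E0])
  qed
  have fb1: "f yb \<le> ereal (fr ys - c0 * (norm (ys - yb))\<^sup>2 - 0)" by (rule lsc_limit[OF yb ev1 ul1])
  have feas: "f ys \<le> f yb" using xs_sol(3) xbD Axb Wxb unfolding ys_def by metis
  have "ereal (fr ys) \<le> ereal (fr ys - c0 * (norm (ys - yb))\<^sup>2)"
    using order_trans[OF feas fb1] f_ys by simp
  hence "fr ys \<le> fr ys - c0 * (norm (ys - yb))\<^sup>2" by simp
  hence "c0 * (norm (ys - yb))\<^sup>2 \<le> 0" by simp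
  hence "norm (ys - yb) = 0" using A2(3) by (simp add: mult_le_0_iff)
  hence ybys: "yb = ys" by simp
  have ev2: "\<forall>\<^sub>F k in sequentially. f (y k) \<le> ereal (fr (y k))"
    unfolding eventually_sequentially using fy1 by (intro exI[of _ 1]) auto
  have ul2: "(\<lambda>k. fr (y k)) \<longlonglongrightarrow> fr ys - LD - 0"
    unfolding fyk by (rule tendsto_diff[OF tendsto_diff[OF tendsto_const LD] E0])
  have "f yb \<le> ereal (fr ys - LD - 0)" by (rule lsc_limit[OF yb ev2 ul2])
  hence "LD \<le> 0" using f_ys ybys by simp
  moreover have "LD \<ge> 0"
  proof (rule LIMSEQ_le_const[OF LD])
    show "\<exists>N. \<forall>n\<ge>N. 0 \<le> Dk n"
    proof (intro exI allI impI)
      fix n :: nat assume n: "n \<ge> 1"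
      have "0 \<le> c0 * (norm (ys - y n))\<^sup>2" using A2(3) by simp
      thus "0 \<le> Dk n" using D_lower[OF n] by linarith
    qed
  qed
  ultimately have LD0: "LD = 0" by simp
  have frc: "(\<lambda>k. fr (y k)) \<longlonglongrightarrow> fr ys" using ul2 LD0 by simp
  have fconv: "(\<lambda>k. f (y k)) \<longlonglongrightarrow> f (W xs)"
  proof -
    have "(\<lambda>k. ereal (fr (y k))) \<longlonglongrightarrow> ereal (fr ys)" using frc by (simp add: lim_ereal)
    hence "(\<lambda>k. ereal (fr (y (Suc k)))) \<longlonglongrightarrow> ereal (fr ys)" by (rule LIMSEQ_Suc)
    hence "(\<lambda>k. f (y (Suc k))) \<longlonglongrightarrow> f ys" using f_y f_ys by simp
    thus ?thesis unfolding ys_def by (rule LIMSEQ_imp_Suc)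
  qed
  have bconv: "(\<lambda>k. bregman f (mu k) (W xs) (y k)) \<longlonglongrightarrow> 0"
  proof -
    have "(\<lambda>k. ereal (Dk k)) \<longlonglongrightarrow> ereal 0" using LD LD0 by (simp add: lim_ereal)
    hence "(\<lambda>k. ereal (Dk (Suc k))) \<longlonglongrightarrow> ereal 0" by (rule LIMSEQ_Suc)
    hence "(\<lambda>k. ereal (Dk (Suc k))) \<longlonglongrightarrow> 0" by (simp only: zero_ereal_def)
    moreover have "bregman f (mu (Suc k)) (W xs) (y (Suc k)) = ereal (Dk (Suc k))" for k
      unfolding bregman_def Dk_def ys_def[symmetric] f_ys f_y by simp
    ultimately have "(\<lambda>k. bregman f (mu (Suc k)) (W xs) (y (Suc k))) \<longlonglongrightarrow> 0" by simp
    thus ?thesis by (rule LIMSEQ_imp_Suc)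
  qed
  have "c1 * (norm (xb - xs))\<^sup>2 \<le> (norm (A (xb - xs)))\<^sup>2 + (norm (W (xb - xs)))\<^sup>2"
    using A4(2) xbD xs_sol(1) D_sub by (simp add: subspace_diff)
  also have "\<dots> = 0" using Axb xs_sol(2) Wxb ybys by (simp add: A_diff W_diff[OF xbD xs_sol(1)] ys_def)
  finally have "norm (xb - xs) = 0" using A4(1) by (simp add: mult_le_0_iff)
  hence xbxs: "xb = xs" by simp
  show ?thesis using xb yb Wx fconv bconv xbxs ybys by (simp add: ys_def)
qed

end

theorem theorem2p7:
  fixes A :: "'x::{real_inner,complete_space} \<Rightarrow> 'h::{real_inner,complete_space}"
    and W :: "'x \<Rightarrow> 'y::{real_inner,complete_space}"
    and D :: "'x set"
    and f :: "'y \<Rightarrow> ereal"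
    and c0 c1 rho1 rho2 :: real
    and b :: 'h
    and xs :: 'x
    and x :: "nat \<Rightarrow> 'x" and y :: "nat \<Rightarrow> 'y"
    and lam :: "nat \<Rightarrow> 'h" and mu :: "nat \<Rightarrow> 'y"
  assumes A1: "bounded_linear A"
    and A2: "proper_fun f" "lsc_fun f" "c0 > 0" "strongly_convex c0 f"
    and A3: "dd_closed_linear_op D W"
    and A4: "c1 > 0" "\<forall>z\<in>D. (norm (A z))\<^sup>2 + (norm (W z))\<^sup>2 \<ge> c1 * (norm z)\<^sup>2"
    and consistent: "\<exists>z\<in>D. A z = b \<and> f (W z) < \<infinity>"
    and xs_sol: "xs \<in> D" "A xs = b"
      "\<forall>z\<in>D. A z = b \<longrightarrow> f (W xs) \<le> f (W z)"
    and rho: "rho1 > 0" "rho2 > 0"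
    and x_step: "\<forall>k. x (Suc k) \<in> D \<and>
       (\<forall>z\<in>D. inner (lam k) (A (x (Suc k))) + inner (mu k) (W (x (Suc k)))
                 + rho1 / 2 * (norm (A (x (Suc k)) - b))\<^sup>2
                 + rho2 / 2 * (norm (W (x (Suc k)) - y k))\<^sup>2
               \<le> inner (lam k) (A z) + inner (mu k) (W z)
                 + rho1 / 2 * (norm (A z - b))\<^sup>2
                 + rho2 / 2 * (norm (W z - y k))\<^sup>2)"
    and y_step: "\<forall>k. \<forall>v.
       f (y (Suc k)) - ereal (inner (mu k) (y (Suc k)))
         + ereal (rho2 / 2 * (norm (W (x (Suc k)) - y (Suc k)))\<^sup>2)
       \<le> f v - ereal (inner (mu k) v) + ereal (rho2 / 2 * (norm (W (x (Suc k)) - v))\<^sup>2)"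
    and lam_step: "\<forall>k. lam (Suc k) = lam k + rho1 *\<^sub>R (A (x (Suc k)) - b)"
    and mu_step: "\<forall>k. mu (Suc k) = mu k + rho2 *\<^sub>R (W (x (Suc k)) - y (Suc k))"
  shows "x \<longlonglongrightarrow> xs \<and> y \<longlonglongrightarrow> W xs \<and> (\<lambda>k. W (x k)) \<longlonglongrightarrow> W xs
         \<and> (\<lambda>k. f (y k)) \<longlonglongrightarrow> f (W xs)
         \<and> (\<lambda>k. bregman f (mu k) (W xs) (y k)) \<longlonglongrightarrow> 0"
  proof -
  have I: "admm A W D f c0 c1 rho1 rho2 b xs x y lam mu"
    unfolding admm_def
    using A1 A2 A3 A4 consistent xs_sol rho x_step y_step lam_step mu_step
    by (intro conjI) assumption+
  show ?thesis by (rule admm.main_result[OF I])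
qed

end
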